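(* Let $\mathcal M^{(1)},\mathcal M^{(2)}$ be nonzero Hilbert spaces and for $k=1,2$ let $W^{(k)}\in\mathcal B(\ell^2_{\mathcal M^{(k)}})$ be an operator valued unilateral weighted shift with weights $\{W^{(k)}_n\}_{n\ge0}\subseteq\mathcal B(\mathcal M^{(k)})$, each having dense range. For $i\ge1$ put $W^{(k)}_{[i]}=W^{(k)}_{i-1}\cdots W^{(k)}_0$. Then $W^{(1)}\cong W^{(2)}$ if and only if there is a unitary isomorphism $U_0:\mathcal M^{(1)}\to\mathcal M^{(2)}$ with $|W^{(1)}_{[i]}|=U_0^*|W^{(2)}_{[i]}|U_0$ for all $i\ge1$.
   Context: For a nonzero Hilbert space $\mathcal M$, $\ell^2_{\mathcal M}$ is the space of square-summable sequences in $\mathcal M$; the operator valued unilateral weighted shift with uniformly bounded weights $\{W_n\}\subseteq\mathcal B(\mathcal M)$ is $W(h_0,h_1,\ldots)=(0,W_0h_0,W_1h_1,\ldots)$. $|A|=(A^*A)^{1/2}$. $\cong$ denotes unitary equivalence. *)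

theory Defs
  imports "HOL-Analysis.Analysis"
begin

text \<open>HOL-Analysis only provides real inner product spaces, so we introduce complex
Hilbert spaces as a type class: a complete real normed vector space with a compatible
complex scalar multiplication and a complex inner product (linear in the second
argument, conjugate linear in the first) inducing the norm.\<close>

class complex_hilbert = real_normed_vector + complete_space +
  fixes scaleC :: "complex \<Rightarrow> 'a \<Rightarrow> 'a" (infixr \<open>*\<^sub>C\<close> 75)
    and cinner :: "'a \<Rightarrow> 'a \<Rightarrow> complex"
  assumes scaleC_add_right: "a *\<^sub>C (x + y) = a *\<^sub>C x + a *\<^sub>C y"
    and scaleC_add_left: "(a + b) *\<^sub>C x = a *\<^sub>C x + b *\<^sub>C x"
    and scaleC_scaleC: "a *\<^sub>C (b *\<^sub>C x) = (a * b) *\<^sub>C x"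
    and scaleC_one: "1 *\<^sub>C x = x"
    and scaleC_of_real: "(complex_of_real r) *\<^sub>C x = r *\<^sub>R x"
    and cinner_cnj_commute: "cinner x y = cnj (cinner y x)"
    and cinner_add_right: "cinner x (y + z) = cinner x y + cinner x z"
    and cinner_scaleC_right: "cinner x (a *\<^sub>C y) = a * cinner x y"
    and cinner_self_norm: "cinner x x = complex_of_real ((norm x)\<^sup>2)"

definition bounded_clinear :: "('a::complex_hilbert \<Rightarrow> 'b::complex_hilbert) \<Rightarrow> bool" where
  "bounded_clinear T \<longleftrightarrow>
     (\<forall>x y. T (x + y) = T x + T y) \<and> (\<forall>a x. T (a *\<^sub>C x) = a *\<^sub>C T x) \<and>
     (\<exists>K. \<forall>x. norm (T x) \<le> norm x * K)"

definition adjoint :: "('a::complex_hilbert \<Rightarrow> 'b::complex_hilbert) \<Rightarrow> ('b \<Rightarrow> 'a)" where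
  "adjoint T = (THE S. \<forall>x y. cinner (T x) y = cinner x (S y))"

definition positive_op :: "('a::complex_hilbert \<Rightarrow> 'a) \<Rightarrow> bool" where
  "positive_op S \<longleftrightarrow> bounded_clinear S \<and>
     (\<forall>x. Im (cinner x (S x)) = 0 \<and> 0 \<le> Re (cinner x (S x)))"

definition op_sqrt :: "('a::complex_hilbert \<Rightarrow> 'a) \<Rightarrow> ('a \<Rightarrow> 'a)" where
  "op_sqrt P = (THE S. positive_op S \<and> S \<circ> S = P)"

definition op_abs :: "('a::complex_hilbert \<Rightarrow> 'b::complex_hilbert) \<Rightarrow> ('a \<Rightarrow> 'a)" where
  "op_abs A = op_sqrt (adjoint A \<circ> A)"

definition unitary :: "('a::complex_hilbert \<Rightarrow> 'b::complex_hilbert) \<Rightarrow> bool" where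
  "unitary U \<longleftrightarrow> bounded_clinear U \<and> surj U \<and> (\<forall>x. norm (U x) = norm x)"

definition l2seq :: "(nat \<Rightarrow> 'a::complex_hilbert) set" where
  "l2seq = {h. summable (\<lambda>n. (norm (h n))\<^sup>2)}"

definition l2norm :: "(nat \<Rightarrow> 'a::complex_hilbert) \<Rightarrow> real" where
  "l2norm h = sqrt (\<Sum>n. (norm (h n))\<^sup>2)"

definition unitary_l2 :: "((nat \<Rightarrow> 'a::complex_hilbert) \<Rightarrow> (nat \<Rightarrow> 'b::complex_hilbert)) \<Rightarrow> bool" where
  "unitary_l2 V \<longleftrightarrow>
     (\<forall>h\<in>l2seq. V h \<in> l2seq) \<and> (\<forall>g\<in>l2seq. \<exists>h\<in>l2seq. V h = g) \<and>
     (\<forall>h\<in>l2seq. \<forall>g\<in>l2seq. V (\<lambda>n. h n + g n) = (\<lambda>n. V h n + V g n)) \<and>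
     (\<forall>a. \<forall>h\<in>l2seq. V (\<lambda>n. a *\<^sub>C h n) = (\<lambda>n. a *\<^sub>C V h n)) \<and>
     (\<forall>h\<in>l2seq. l2norm (V h) = l2norm h)"

definition unit_equiv_l2 ::
  "((nat \<Rightarrow> 'a::complex_hilbert) \<Rightarrow> (nat \<Rightarrow> 'a)) \<Rightarrow> ((nat \<Rightarrow> 'b::complex_hilbert) \<Rightarrow> (nat \<Rightarrow> 'b)) \<Rightarrow> bool" where
  "unit_equiv_l2 A B \<longleftrightarrow> (\<exists>V. unitary_l2 V \<and> (\<forall>h\<in>l2seq. V (A h) = B (V h)))"

definition wshift :: "(nat \<Rightarrow> 'a::complex_hilbert \<Rightarrow> 'a) \<Rightarrow> (nat \<Rightarrow> 'a) \<Rightarrow> (nat \<Rightarrow> 'a)" where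
  "wshift W h = (\<lambda>n. case n of 0 \<Rightarrow> 0 | Suc m \<Rightarrow> W m (h m))"

definition shift_weights_dense :: "(nat \<Rightarrow> 'a::complex_hilbert \<Rightarrow> 'a) \<Rightarrow> bool" where
  "shift_weights_dense W \<longleftrightarrow>
     (\<forall>n. bounded_clinear (W n)) \<and> (\<exists>C. \<forall>n x. norm (W n x) \<le> C * norm x) \<and>
     (\<forall>n. closure (range (W n)) = UNIV)"

text \<open>\<open>W\<^sub>[\<^sub>i\<^sub>] = W\<^sub>i\<^sub>-\<^sub>1 \<cdots> W\<^sub>0\<close> (with \<open>W\<^sub>[\<^sub>0\<^sub>] = id\<close>, unused).\<close>
primrec wprod :: "(nat \<Rightarrow> 'a \<Rightarrow> 'a) \<Rightarrow> nat \<Rightarrow> 'a \<Rightarrow> 'a" where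
  "wprod W 0 = id"
| "wprod W (Suc i) = W i \<circ> wprod W i"

end

theory Submission
  imports Defs
begin


lemma cinner_add_left: "cinner (x + y) z = cinner x z + cinner y z"
  by (metis cinner_add_right cinner_cnj_commute complex_cnj_add)

lemma cinner_scaleC_left: "cinner (a *\<^sub>C x) y = cnj a * cinner x y"
  by (metis cinner_cnj_commute cinner_scaleC_right complex_cnj_mult)

lemma scaleC_zero_right[simp]: "a *\<^sub>C 0 = 0"
  by (metis add_cancel_right_right scaleC_add_right add_0)

lemma scaleC_zero_left[simp]: "0 *\<^sub>C x = 0"
proof -
  have "0 *\<^sub>C x + 0 *\<^sub>C x = 0 *\<^sub>C x + 0" by (metis scaleC_add_left add_0 add_0_right)
  then show ?thesis by (rule add_left_imp_eq)
qed

lemma scaleC_minus_right: "a *\<^sub>C (- x) = - (a *\<^sub>C x)"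
proof -
  have "a *\<^sub>C (- x) + a *\<^sub>C x = 0" by (metis scaleC_add_right scaleC_zero_right left_minus)
  then show ?thesis by (simp add: eq_neg_iff_add_eq_0)
qed

lemma scaleC_diff_right: "a *\<^sub>C (x - y) = a *\<^sub>C x - a *\<^sub>C y"
  by (metis diff_conv_add_uminus scaleC_add_right scaleC_minus_right)

lemma scaleC_minus_left: "(- a) *\<^sub>C x = - (a *\<^sub>C x)"
proof -
  have "(- a) *\<^sub>C x + a *\<^sub>C x = 0" by (metis scaleC_add_left scaleC_zero_left left_minus)
  then show ?thesis by (simp add: eq_neg_iff_add_eq_0)
qed

lemma scaleC_diff_left: "(a - b) *\<^sub>C x = a *\<^sub>C x - b *\<^sub>C x"
  by (metis diff_conv_add_uminus scaleC_add_left scaleC_minus_left)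

lemma scaleC_real: "complex_of_real r *\<^sub>C x = r *\<^sub>R x" by (rule scaleC_of_real)

lemma scaleR_scaleC: "r *\<^sub>R (a *\<^sub>C x) = (complex_of_real r * a) *\<^sub>C x"
  by (metis scaleC_of_real scaleC_scaleC)

lemma scaleC_scaleR: "a *\<^sub>C (r *\<^sub>R x) = (complex_of_real r * a) *\<^sub>C x"
  by (metis scaleC_of_real scaleC_scaleC mult.commute)

lemma cinner_zero_left[simp]: "cinner 0 y = 0"
  by (metis add_cancel_right_right cinner_add_left add_0)

lemma cinner_zero_right[simp]: "cinner x 0 = 0"
  by (metis add_cancel_right_right cinner_add_right add_0)

lemma cinner_minus_left: "cinner (- x) y = - cinner x y"
proof -
  have "cinner (- x) y + cinner x y = 0" by (metis cinner_add_left cinner_zero_left left_minus)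
  then show ?thesis by (simp add: eq_neg_iff_add_eq_0)
qed

lemma cinner_minus_right: "cinner x (- y) = - cinner x y"
proof -
  have "cinner x (- y) + cinner x y = 0" by (metis cinner_add_right cinner_zero_right left_minus)
  then show ?thesis by (simp add: eq_neg_iff_add_eq_0)
qed

lemma cinner_diff_left: "cinner (x - y) z = cinner x z - cinner y z"
  by (simp only: diff_conv_add_uminus cinner_add_left cinner_minus_left)

lemma cinner_diff_right: "cinner x (y - z) = cinner x y - cinner x z"
  by (simp only: diff_conv_add_uminus cinner_add_right cinner_minus_right)

lemma cinner_scaleR_left: "cinner (r *\<^sub>R x) y = complex_of_real r * cinner x y"
  by (metis cinner_scaleC_left complex_cnj_complex_of_real scaleC_of_real)

lemma cinner_scaleR_right: "cinner x (r *\<^sub>R y) = complex_of_real r * cinner x y"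
  by (metis cinner_scaleC_right scaleC_of_real)

lemma cinner_self_Re: "Re (cinner x x) = (norm x)\<^sup>2"
  by (simp add: cinner_self_norm)

lemma cinner_self_Im: "Im (cinner x x) = 0"
  by (simp add: cinner_self_norm)

lemma norm_scaleC: "norm (a *\<^sub>C x) = cmod a * norm x"
proof -
  have "complex_of_real ((norm (a *\<^sub>C x))\<^sup>2) = cinner (a *\<^sub>C x) (a *\<^sub>C x)"
    by (simp add: cinner_self_norm)
  also have "\<dots> = cnj a * a * cinner x x"
    by (simp add: cinner_scaleC_left cinner_scaleC_right)
  also have "\<dots> = complex_of_real ((cmod a)\<^sup>2) * complex_of_real ((norm x)\<^sup>2)"
    by (metis cinner_self_norm complex_norm_square mult.commute)
  also have "\<dots> = complex_of_real ((cmod a * norm x)\<^sup>2)"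
    by (simp only: of_real_mult[symmetric] power_mult_distrib)
  finally have "(norm (a *\<^sub>C x))\<^sup>2 = (cmod a * norm x)\<^sup>2" using of_real_eq_iff by blast
  then show ?thesis by (simp add: power2_eq_iff_nonneg)
qed

lemma bounded_linear_scaleC: "bounded_linear (\<lambda>x. a *\<^sub>C x)"
proof
  show "a *\<^sub>C (x + y) = a *\<^sub>C x + a *\<^sub>C y" for x y by (rule scaleC_add_right)
  show "a *\<^sub>C (r *\<^sub>R x) = r *\<^sub>R (a *\<^sub>C x)" for r x
    by (simp add: scaleC_scaleR scaleR_scaleC)
  show "\<exists>K. \<forall>x. norm (a *\<^sub>C x) \<le> norm x * K"
    by (rule exI[of _ "cmod a"]) (simp add: norm_scaleC mult.commute)
qed

lemma cinner_eqI: assumes "\<And>x. cinner x y = cinner x z" shows "y = z"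
proof -
  have "cinner (y - z) (y - z) = 0" using assms[of "y - z"] by (simp add: cinner_diff_right)
  then show ?thesis by (simp add: cinner_self_norm)
qed

lemma cauchy_schwarz: "cmod (cinner x y) \<le> norm x * norm y"
proof (cases "y = 0")
  case True then show ?thesis by simp
next
  case False
  define N where "N = (norm y)\<^sup>2"
  have N: "N > 0" using False by (simp add: N_def)
  define z where "z = cinner y x"
  define c where "c = z / complex_of_real N"
  have "cinner (x - c *\<^sub>C y) (x - c *\<^sub>C y)
       = cinner x x - c * cinner x y - cnj c * cinner y x + cnj c * c * cinner y y"
    by (simp add: cinner_diff_left cinner_diff_right cinner_scaleC_left cinner_scaleC_right algebra_simps)
  also have "cinner x y = cnj z" by (simp add: z_def cinner_cnj_commute[of x y])
  also have "cinner y y = complex_of_real N" by (simp add: N_def cinner_self_norm)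
  also have "cinner y x = z" by (simp add: z_def)
  also have "cinner x x - c * cnj z - cnj c * z + cnj c * c * complex_of_real N
     = cinner x x - z * cnj z / complex_of_real N"
    using N by (simp add: c_def field_simps power2_eq_square)
  finally have e0: "cinner (x - c *\<^sub>C y) (x - c *\<^sub>C y) = cinner x x - z * cnj z / complex_of_real N" .
  have zz: "z * cnj z = complex_of_real ((cmod z)\<^sup>2)" by (metis complex_norm_square)
  have e: "cinner (x - c *\<^sub>C y) (x - c *\<^sub>C y) = cinner x x - complex_of_real ((cmod z)\<^sup>2 / N)"
    unfolding e0 zz by simp
  have "0 \<le> Re (cinner (x - c *\<^sub>C y) (x - c *\<^sub>C y))" by (simp add: cinner_self_norm)
  moreover have "Re (cinner (x - c *\<^sub>C y) (x - c *\<^sub>C y)) = (norm x)\<^sup>2 - (cmod z)\<^sup>2 / N"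
    by (simp only: e minus_complex.sel Re_complex_of_real cinner_self_Re)
  ultimately have "(cmod z)\<^sup>2 / N \<le> (norm x)\<^sup>2" by linarith
  then have "(cmod z)\<^sup>2 \<le> (norm x)\<^sup>2 * (norm y)\<^sup>2" using N by (simp add: N_def field_simps)
  then have "(cmod z)\<^sup>2 \<le> (norm x * norm y)\<^sup>2" by (simp add: power_mult_distrib)
  then have "cmod z \<le> norm x * norm y" by (simp add: power2_le_iff_abs_le)
  then show ?thesis by (metis z_def complex_mod_cnj cinner_cnj_commute)
qed


lemma bclinD:
  assumes "bounded_clinear T"
  shows "T (x + y) = T x + T y" "T (a *\<^sub>C x) = a *\<^sub>C T x"
  using assms unfolding bounded_clinear_def by auto

lemma bclin_bound:
  assumes "bounded_clinear T"
  obtains K where "K \<ge> 0" "\<And>x. norm (T x) \<le> norm x * K"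
proof -
  obtain K where K: "\<And>x. norm (T x) \<le> norm x * K" using assms unfolding bounded_clinear_def by auto
  have "norm (T x) \<le> norm x * max K 0" for x
    using K[of x] by (smt (verit) mult_left_mono norm_ge_zero max.cobounded1)
  then show ?thesis using that[of "max K 0"] by auto
qed

lemma bclin_linear:
  assumes "bounded_clinear T"
  shows "bounded_linear T"
proof
  show "T (x + y) = T x + T y" for x y using bclinD[OF assms] by auto
  show "T (r *\<^sub>R x) = r *\<^sub>R T x" for r x
    using bclinD(2)[OF assms, of "complex_of_real r" x] by (simp add: scaleC_of_real)
  show "\<exists>K. \<forall>x. norm (T x) \<le> norm x * K" using assms unfolding bounded_clinear_def by auto
qed

lemma bclin_zero: "bounded_clinear T \<Longrightarrow> T 0 = 0"
  using bclin_linear linear_simps(3) bounded_linear.linear by blast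

lemma bclin_minus: assumes "bounded_clinear T" shows "T (- x) = - T x"
  using bclin_linear[OF assms, THEN bounded_linear.linear] by (simp add: linear_neg)

lemma bclin_diff: assumes "bounded_clinear T" shows "T (x - y) = T x - T y"
  using bclin_linear[OF assms, THEN bounded_linear.linear] by (simp add: linear_diff)

lemma bclin_scaleR: assumes "bounded_clinear T" shows "T (r *\<^sub>R x) = r *\<^sub>R T x"
  using bclin_linear[OF assms, THEN bounded_linear.linear] by (simp add: linear_scale)

lemma bclin_comp:
  assumes "bounded_clinear S" "bounded_clinear T"
  shows "bounded_clinear (S \<circ> T)"
proof -
  obtain K1 where K1: "K1 \<ge> 0" "\<And>x. norm (S x) \<le> norm x * K1" using bclin_bound[OF assms(1)] by blast
  obtain K2 where K2: "K2 \<ge> 0" "\<And>x. norm (T x) \<le> norm x * K2" using bclin_bound[OF assms(2)] by blast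
  have "norm (S (T x)) \<le> norm x * (K2 * K1)" for x
  proof -
    have "norm (S (T x)) \<le> norm (T x) * K1" by (rule K1)
    also have "\<dots> \<le> norm x * K2 * K1" using K2 K1 by (simp add: mult_right_mono)
    finally show ?thesis by (simp add: mult.assoc)
  qed
  then show ?thesis using assms unfolding bounded_clinear_def by auto
qed

lemma bclin_id: "bounded_clinear (id :: 'a::complex_hilbert \<Rightarrow> 'a)"
  unfolding bounded_clinear_def by (auto intro!: exI[of _ 1])

lemma bclinI:
  assumes "bounded_linear T" "\<And>a x. T (a *\<^sub>C x) = a *\<^sub>C T x"
  shows "bounded_clinear T"
  using assms unfolding bounded_clinear_def
  by (metis bounded_linear.bounded bounded_linear.axioms(1) linear_add mult.commute)

lemma norm_add_sq: "(norm (u + v))\<^sup>2 = (norm u)\<^sup>2 + (norm v)\<^sup>2 + 2 * Re (cinner u v)"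
proof -
  have "(norm (u + v))\<^sup>2 = Re (cinner (u + v) (u + v))" by (simp add: cinner_self_Re)
  also have "\<dots> = Re (cinner u u) + Re (cinner v v) + Re (cinner u v) + Re (cinner v u)"
    by (simp add: cinner_add_left cinner_add_right)
  also have "Re (cinner v u) = Re (cinner u v)" by (subst cinner_cnj_commute) simp
  finally show ?thesis by (simp add: cinner_self_Re)
qed

lemma norm_diff_sq: "(norm (u - v))\<^sup>2 = (norm u)\<^sup>2 + (norm v)\<^sup>2 - 2 * Re (cinner u v)"
  using norm_add_sq[of u "- v"] by (simp add: cinner_minus_right)

lemma re_polar: "4 * Re (cinner u v) = (norm (u + v))\<^sup>2 - (norm (u - v))\<^sup>2"
  using norm_add_sq[of u v] norm_diff_sq[of u v] by simp

lemma im_as_re: "Im (cinner u v) = Re (cinner u ((- \<i>) *\<^sub>C v))"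
  by (simp add: cinner_scaleC_right)

lemma polarization:
  fixes f :: "'a::complex_hilbert \<Rightarrow> 'b::complex_hilbert" and g :: "'a \<Rightarrow> 'c::complex_hilbert"
  assumes f: "\<And>x y. f (x + y) = f x + f y" "\<And>a x. f (a *\<^sub>C x) = a *\<^sub>C f x"
    and g: "\<And>x y. g (x + y) = g x + g y" "\<And>a x. g (a *\<^sub>C x) = a *\<^sub>C g x"
    and n: "\<And>x. norm (f x) = norm (g x)"
  shows "cinner (f x) (f y) = cinner (g x) (g y)"
proof -
  have fd: "f (x - y) = f x - f y" for x y
    using f by (metis add_diff_cancel diff_add_cancel)
  have gd: "g (x - y) = g x - g y" for x y
    using g by (metis add_diff_cancel diff_add_cancel)
  have re: "Re (cinner (f x) (f y)) = Re (cinner (g x) (g y))" for x y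
  proof -
    have "4 * Re (cinner (f x) (f y)) = (norm (f (x + y)))\<^sup>2 - (norm (f (x - y)))\<^sup>2"
      by (simp add: re_polar f fd)
    also have "\<dots> = (norm (g (x + y)))\<^sup>2 - (norm (g (x - y)))\<^sup>2" by (simp add: n)
    also have "\<dots> = 4 * Re (cinner (g x) (g y))" by (simp add: re_polar g gd)
    finally show ?thesis by simp
  qed
  have im: "Im (cinner (f x) (f y)) = Im (cinner (g x) (g y))"
    using re[of x "(- \<i>) *\<^sub>C y"] by (simp add: im_as_re f(2) g(2))
  show ?thesis using re[of x y] im by (simp add: complex_eqI)
qed

lemma positive_selfadj:
  assumes "positive_op S"
  shows "cinner (S x) y = cinner x (S y)"
proof -
  have bc: "bounded_clinear S" using assms unfolding positive_op_def by auto
  have im0: "Im (cinner z (S z)) = 0" for z using assms unfolding positive_op_def by auto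
  define q where "q u v = cinner u (S v)" for u v
  have qadd: "q (u1 + u2) (v1 + v2) = q u1 v1 + q u1 v2 + q u2 v1 + q u2 v2" for u1 u2 v1 v2
    by (simp add: q_def bclinD[OF bc] cinner_add_left cinner_add_right)
  have qs: "q (a *\<^sub>C u) (b *\<^sub>C v) = cnj a * b * q u v" for a b u v
    by (simp add: q_def bclinD[OF bc] cinner_scaleC_left cinner_scaleC_right)
  have "Im (q (x + y) (x + y)) = 0" using im0 by (simp add: q_def)
  then have 1: "Im (q x y + q y x) = 0"
    using im0[of x] im0[of y] qadd[of x y x y] by (simp add: q_def)
  have "Im (q (x + \<i> *\<^sub>C y) (x + \<i> *\<^sub>C y)) = 0" using im0 by (simp add: q_def)
  then have "Im (q x x + q x (\<i> *\<^sub>C y) + q (\<i> *\<^sub>C y) x + q (\<i> *\<^sub>C y) (\<i> *\<^sub>C y)) = 0"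
    by (simp add: qadd)
  moreover have "q x (\<i> *\<^sub>C y) = \<i> * q x y" using qs[of 1 x "\<i>" y] by (simp add: scaleC_one)
  moreover have "q (\<i> *\<^sub>C y) x = - \<i> * q y x" using qs[of "\<i>" y 1 x] by (simp add: scaleC_one)
  moreover have "q (\<i> *\<^sub>C y) (\<i> *\<^sub>C y) = q y y" using qs[of "\<i>" y "\<i>" y] by simp
  ultimately have 2: "Re (q x y - q y x) = 0"
    using im0[of x] im0[of y] by (simp add: q_def)
  have "q x y = cnj (q y x)" using 1 2 by (simp add: complex_eq_iff)
  then show ?thesis by (simp add: q_def cinner_cnj_commute[of "S x" y])
qed

lemma positive_real: "positive_op S \<Longrightarrow> cinner x (S x) = complex_of_real (Re (cinner x (S x)))"
  unfolding positive_op_def by (simp add: complex_eq_iff)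


lemma proj_norm:
  assumes "y \<noteq> 0"
  shows "(norm (x - (cinner y x / complex_of_real ((norm y)\<^sup>2)) *\<^sub>C y))\<^sup>2
         = (norm x)\<^sup>2 - (cmod (cinner y x))\<^sup>2 / (norm y)\<^sup>2"
proof -
  define N where "N = (norm y)\<^sup>2"
  have N: "N > 0" using assms by (simp add: N_def)
  define z where "z = cinner y x"
  define c where "c = z / complex_of_real N"
  have "cinner (x - c *\<^sub>C y) (x - c *\<^sub>C y)
       = cinner x x - c * cinner x y - cnj c * cinner y x + cnj c * c * cinner y y"
    by (simp add: cinner_diff_left cinner_diff_right cinner_scaleC_left cinner_scaleC_right algebra_simps)
  also have "cinner x y = cnj z" by (simp add: z_def cinner_cnj_commute[of x y])
  also have "cinner y y = complex_of_real N" by (simp add: N_def cinner_self_norm)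
  also have "cinner y x = z" by (simp add: z_def)
  also have "cinner x x - c * cnj z - cnj c * z + cnj c * c * complex_of_real N
     = cinner x x - z * cnj z / complex_of_real N"
    using N by (simp add: c_def field_simps power2_eq_square)
  finally have e0: "cinner (x - c *\<^sub>C y) (x - c *\<^sub>C y) = cinner x x - z * cnj z / complex_of_real N" .
  have zz: "z * cnj z = complex_of_real ((cmod z)\<^sup>2)" by (metis complex_norm_square)
  have e: "cinner (x - c *\<^sub>C y) (x - c *\<^sub>C y) = cinner x x - complex_of_real ((cmod z)\<^sup>2 / N)"
    unfolding e0 zz by simp
  have "(norm (x - c *\<^sub>C y))\<^sup>2 = Re (cinner (x - c *\<^sub>C y) (x - c *\<^sub>C y))" by (simp add: cinner_self_Re)
  also have "\<dots> = (norm x)\<^sup>2 - (cmod z)\<^sup>2 / N"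
    by (simp only: e minus_complex.sel Re_complex_of_real cinner_self_Re)
  finally show ?thesis by (simp add: c_def z_def N_def)
qed

lemma parallelogram: fixes u v :: "'a::complex_hilbert" shows "(norm (u + v))\<^sup>2 + (norm (u - v))\<^sup>2 = 2 * (norm u)\<^sup>2 + 2 * (norm v)\<^sup>2"
  using norm_add_sq[of u v] norm_diff_sq[of u v] by simp

lemma riesz:
  fixes \<phi> :: "'a::complex_hilbert \<Rightarrow> complex"
  assumes add: "\<And>x y. \<phi> (x + y) = \<phi> x + \<phi> y"
    and hom: "\<And>a x. \<phi> (a *\<^sub>C x) = a * \<phi> x"
    and bnd: "\<And>x. cmod (\<phi> x) \<le> K * norm x"
  shows "\<exists>z. \<forall>x. \<phi> x = cinner z x"
proof (cases "\<forall>x. \<phi> x = 0")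
  case True then show ?thesis by (intro exI[of _ 0]) simp
next
  case False
  then obtain x0 where x0: "\<phi> x0 \<noteq> 0" by auto
  have phi0: "\<phi> 0 = 0" using add[of 0 0] by simp
  have phiminus: "\<phi> (x - y) = \<phi> x - \<phi> y" for x y
    using add[of "x - y" y] by simp
  have bl: "bounded_linear \<phi>"
  proof
    show "\<phi> (x + y) = \<phi> x + \<phi> y" for x y by (rule add)
    show "\<phi> (r *\<^sub>R x) = r *\<^sub>R \<phi> x" for r x
      using hom[of "complex_of_real r" x] by (simp add: scaleC_of_real scaleR_conv_of_real)
    show "\<exists>K. \<forall>x. norm (\<phi> x) \<le> norm x * K" using bnd by (metis mult.commute norm_complex_def)
  qed
  define N where "N = {x. \<phi> x = 0}"
  have N0: "0 \<in> N" using phi0 by (simp add: N_def)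
  have Nadd: "a \<in> N \<Longrightarrow> b \<in> N \<Longrightarrow> a + b \<in> N" for a b by (simp add: N_def add)
  have Nsc: "a \<in> N \<Longrightarrow> c *\<^sub>C a \<in> N" for a c by (simp add: N_def hom)
  define D where "D = (\<lambda>m. norm (x0 - m)) ` N"
  define d where "d = Inf D"
  have Dne: "D \<noteq> {}" using N0 by (auto simp: D_def)
  have Dbdd: "bdd_below D" by (auto simp: D_def bdd_below_def intro!: exI[of _ 0])
  have dle: "d \<le> norm (x0 - m)" if "m \<in> N" for m
    unfolding d_def using that Dbdd by (auto simp: D_def intro!: cInf_lower)
  have d0: "0 \<le> d" using dle[OF N0] Dne Dbdd unfolding d_def by (auto simp: D_def intro!: cInf_greatest)
  have "\<exists>m\<in>N. (norm (x0 - m))\<^sup>2 < d\<^sup>2 + 1 / (Suc n)" for n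
  proof -
    have "d < sqrt (d\<^sup>2 + 1 / Suc n)"
      using d0 by (metis add_pos_nonneg abs_of_nonneg less_add_same_cancel1 real_less_rsqrt of_nat_0_less_iff
          zero_less_Suc divide_pos_pos zero_less_one add.commute)
    then obtain t where "t \<in> D" "t < sqrt (d\<^sup>2 + 1 / Suc n)"
      using cInf_lessD[OF Dne] unfolding d_def by blast
    then obtain m where m: "m \<in> N" "norm (x0 - m) < sqrt (d\<^sup>2 + 1 / Suc n)" by (auto simp: D_def)
    then have "(norm (x0 - m))\<^sup>2 < d\<^sup>2 + 1 / Suc n"
      by (metis norm_ge_zero real_sqrt_less_iff real_sqrt_unique power2_less_eq_zero_iff
          abs_of_nonneg real_less_rsqrt)
    then show ?thesis using m by blast
  qed
  then obtain ms where ms: "\<And>n. ms n \<in> N" "\<And>n. (norm (x0 - ms n))\<^sup>2 < d\<^sup>2 + 1 / Suc n"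
    by metis
  have cauchy_bound: "(norm (ms n - ms k))\<^sup>2 \<le> 2 / Suc n + 2 / Suc k" for n k
  proof -
    have mid: "(1/2) *\<^sub>R (ms n + ms k) \<in> N"
      using Nsc[OF Nadd[OF ms(1)[of n] ms(1)[of k]], of "complex_of_real (1/2)"] unfolding scaleC_of_real .
    have "x0 - ms k + (x0 - ms n) = 2 *\<^sub>R (x0 - (1/2) *\<^sub>R (ms n + ms k))"
      by (simp add: algebra_simps scaleR_2)
    then have "(norm (x0 - ms k + (x0 - ms n)))\<^sup>2 = 4 * (norm (x0 - (1/2) *\<^sub>R (ms n + ms k)))\<^sup>2"
      by (simp add: power_mult_distrib)
    moreover have "d\<^sup>2 \<le> (norm (x0 - (1/2) *\<^sub>R (ms n + ms k)))\<^sup>2"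
      using dle[OF mid] d0 by (simp add: power_mono)
    moreover have eq3: "x0 - ms k - (x0 - ms n) = ms n - ms k" by simp
    moreover note parallelogram[of "x0 - ms k" "x0 - ms n", unfolded eq3] ms(2)[of n] ms(2)[of k]
    ultimately show ?thesis by linarith
  qed
  have "Cauchy ms"
  proof (rule metric_CauchyI)
    fix e :: real assume e: "0 < e"
    obtain M :: nat where M: "4 / e\<^sup>2 < M" using reals_Archimedean2 by blast
    have "dist (ms m) (ms n) < e" if "m \<ge> M" "n \<ge> M" for m n
    proof -
      have "e\<^sup>2 > 0" using e by simp
      have Mpos: "real M > 0" using M e by (smt (verit) divide_pos_pos zero_less_power)
      have "2 / Suc m \<le> 2 / M" using that Mpos by (simp add: frac_le)
      moreover have "2 / Suc n \<le> 2 / M" using that Mpos by (simp add: frac_le)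
      moreover have "4 / M < e\<^sup>2" using M Mpos e by (simp add: field_simps)
      ultimately have "(norm (ms m - ms n))\<^sup>2 < e\<^sup>2" using cauchy_bound[of m n] by linarith
      then show ?thesis using e by (simp add: dist_norm power_less_imp_less_base)
    qed
    then show "\<exists>M. \<forall>m\<ge>M. \<forall>n\<ge>M. dist (ms m) (ms n) < e" by blast
  qed
  then obtain m where lim: "ms \<longlonglongrightarrow> m" using Cauchy_convergent_iff convergent_def by blast
  have "(\<lambda>n. \<phi> (ms n)) \<longlonglongrightarrow> \<phi> m" using bl lim by (rule bounded_linear.tendsto)
  then have "\<phi> m = 0" using ms(1) by (simp add: N_def LIMSEQ_const_iff)
  then have mN: "m \<in> N" by (simp add: N_def)
  have "(\<lambda>n. (norm (x0 - ms n))\<^sup>2) \<longlonglongrightarrow> (norm (x0 - m))\<^sup>2"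
    by (intro tendsto_intros lim)
  moreover have "(\<lambda>n. d\<^sup>2 + 1 / Suc n) \<longlonglongrightarrow> d\<^sup>2 + 0"
    by (intro tendsto_intros LIMSEQ_Suc[OF lim_inverse_n'[unfolded inverse_eq_divide]]) 
  ultimately have "(norm (x0 - m))\<^sup>2 \<le> d\<^sup>2"
    using ms(2) by (intro LIMSEQ_le) (auto intro: less_imp_le)
  define u where "u = x0 - m"
  have ud: "(norm u)\<^sup>2 \<le> (norm (u - v))\<^sup>2" if "v \<in> N" for v
  proof -
    have "m + v \<in> N" using mN that by (rule Nadd)
    then have "d \<le> norm (x0 - (m + v))" by (rule dle)
    then have "d\<^sup>2 \<le> (norm (u - v))\<^sup>2" using d0 by (simp add: u_def power_mono algebra_simps)
    then show ?thesis using \<open>(norm (x0 - m))\<^sup>2 \<le> d\<^sup>2\<close> unfolding u_def by linarith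
  qed
  have orth: "cinner v u = 0" if "v \<in> N" for v
  proof (cases "v = 0")
    case True then show ?thesis by simp
  next
    case False
    have "(cinner v u / complex_of_real ((norm v)\<^sup>2)) *\<^sub>C v \<in> N" using that by (rule Nsc)
    from ud[OF this] proj_norm[OF False, of u]
    have "(cmod (cinner v u))\<^sup>2 / (norm v)\<^sup>2 \<le> 0" by linarith
    then have "(cmod (cinner v u))\<^sup>2 \<le> 0" using False by (simp add: divide_le_0_iff)
    then show ?thesis by simp
  qed
  have phiu: "\<phi> u = \<phi> x0" using \<open>\<phi> m = 0\<close> by (simp add: u_def phiminus)
  have u0: "u \<noteq> 0" using phiu x0 phi0 by auto
  have "cinner u x = (\<phi> x / \<phi> u) * cinner u u" for x
  proof -
    have "\<phi> (x - (\<phi> x / \<phi> u) *\<^sub>C u) = 0" using phiu x0 by (simp add: phiminus hom)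
    then have "cinner (x - (\<phi> x / \<phi> u) *\<^sub>C u) u = 0" using orth by (simp add: N_def)
    then have "cinner u (x - (\<phi> x / \<phi> u) *\<^sub>C u) = 0" by (metis cinner_cnj_commute complex_cnj_zero)
    then show ?thesis by (simp add: cinner_diff_right cinner_scaleC_right)
  qed
  moreover have uu: "cinner u u \<noteq> 0" using u0 by (simp add: cinner_self_norm)
  ultimately have "\<phi> x = cinner (cnj (\<phi> u / cinner u u) *\<^sub>C u) x" for x
    using phiu x0 by (simp add: cinner_scaleC_left field_simps)
  then show ?thesis by blast
qed


lemma adjoint_exists:
  fixes T :: "'a::complex_hilbert \<Rightarrow> 'b::complex_hilbert"
  assumes "bounded_clinear T"
  shows "\<exists>S. \<forall>x y. cinner (T x) y = cinner x (S y)"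
proof -
  obtain K where K: "K \<ge> 0" "\<And>x. norm (T x) \<le> norm x * K" using bclin_bound[OF assms] by blast
  have "\<exists>z. \<forall>x. cinner y (T x) = cinner z x" for y
  proof (rule riesz)
    show "cinner y (T (x1 + x2)) = cinner y (T x1) + cinner y (T x2)" for x1 x2
      by (simp add: bclinD[OF assms] cinner_add_right)
    show "cinner y (T (a *\<^sub>C x)) = a * cinner y (T x)" for a x
      by (simp add: bclinD[OF assms] cinner_scaleC_right)
    show "cmod (cinner y (T x)) \<le> (norm y * K) * norm x" for x
    proof -
      have "cmod (cinner y (T x)) \<le> norm y * norm (T x)" by (rule cauchy_schwarz)
      also have "\<dots> \<le> norm y * (norm x * K)" using K by (simp add: mult_left_mono)
      finally show ?thesis by (simp add: algebra_simps)
    qed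
  qed
  then obtain S where S: "\<And>y x. cinner y (T x) = cinner (S y) x" by metis
  have "cinner (T x) y = cinner x (S y)" for x y
    by (metis S cinner_cnj_commute)
  then show ?thesis by blast
qed

lemma adjoint_char:
  fixes T :: "'a::complex_hilbert \<Rightarrow> 'b::complex_hilbert"
  assumes "bounded_clinear T"
  shows "cinner (T x) y = cinner x (adjoint T y)"
proof -
  obtain S where S: "\<forall>x y. cinner (T x) y = cinner x (S y)" using adjoint_exists[OF assms] by blast
  have "\<forall>x y. cinner (T x) y = cinner x (adjoint T y)"
    unfolding adjoint_def
  proof (rule theI[of _ S])
    show "\<forall>x y. cinner (T x) y = cinner x (S y)" by (rule S)
    show "R = S" if "\<forall>x y. cinner (T x) y = cinner x (R y)" for R
      using that S by (intro ext cinner_eqI) metis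
  qed
  then show ?thesis by blast
qed

lemma adjoint_unique:
  fixes T :: "'a::complex_hilbert \<Rightarrow> 'b::complex_hilbert"
  assumes "bounded_clinear T" "\<And>x y. cinner (T x) y = cinner x (S y)"
  shows "adjoint T = S"
  using assms adjoint_char[OF assms(1)] by (intro ext cinner_eqI) metis

lemma adjoint_bclin:
  fixes T :: "'a::complex_hilbert \<Rightarrow> 'b::complex_hilbert"
  assumes "bounded_clinear T"
  shows "bounded_clinear (adjoint T)"
proof -
  note A = adjoint_char[OF assms]
  obtain K where K: "K \<ge> 0" "\<And>x. norm (T x) \<le> norm x * K" using bclin_bound[OF assms] by blast
  have add: "adjoint T (x + y) = adjoint T x + adjoint T y" for x y
    by (rule cinner_eqI) (simp add: A[symmetric] cinner_add_right)
  have hom: "adjoint T (a *\<^sub>C x) = a *\<^sub>C adjoint T x" for a x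
    by (rule cinner_eqI) (simp add: A[symmetric] cinner_scaleC_right)
  have "norm (adjoint T y) \<le> norm y * K" for y
  proof -
    have "(norm (adjoint T y))\<^sup>2 = Re (cinner (adjoint T y) (adjoint T y))" by (simp add: cinner_self_Re)
    also have "\<dots> = Re (cinner (T (adjoint T y)) y)" by (simp add: A)
    also have "\<dots> \<le> cmod (cinner (T (adjoint T y)) y)" by (rule complex_Re_le_cmod)
    also have "\<dots> \<le> norm (T (adjoint T y)) * norm y" by (rule cauchy_schwarz)
    also have "\<dots> \<le> (norm (adjoint T y) * K) * norm y" using K by (simp add: mult_right_mono)
    finally have "norm (adjoint T y) * norm (adjoint T y) \<le> norm (adjoint T y) * (norm y * K)"
      by (simp add: power2_eq_square algebra_simps)
    then show ?thesis
      using K by (cases "norm (adjoint T y) = 0") (auto simp: mult_le_cancel_left)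
  qed
  then show ?thesis unfolding bounded_clinear_def using add hom by blast
qed

lemma unitary_cinner:
  assumes "unitary U"
  shows "cinner (U x) (U y) = cinner x y"
proof -
  have bc: "bounded_clinear U" using assms by (simp add: unitary_def)
  show ?thesis
    using polarization[of U id] bclinD[OF bc] assms unfolding unitary_def by auto
qed

lemma unitary_adjoint:
  assumes "unitary U"
  shows "adjoint U = inv U" and "\<And>y. U (adjoint U y) = y" and "\<And>x. adjoint U (U x) = x"
    and "bounded_clinear (adjoint U)"  and "\<And>y. norm (adjoint U y) = norm y"
proof -
  have bc: "bounded_clinear U" and s: "surj U" and n: "\<And>x. norm (U x) = norm x"
    using assms by (auto simp: unitary_def)
  have Ui: "U (inv U y) = y" for y using s by (simp add: surj_f_inv_f)
  show 1: "adjoint U = inv U"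
  proof (rule adjoint_unique[OF bc])
    fix x y show "cinner (U x) y = cinner x (inv U y)"
      by (metis Ui unitary_cinner[OF assms])
  qed
  show "U (adjoint U y) = y" for y by (simp add: 1 Ui)
  have inj: "inj U"
  proof (rule injI)
    fix a b assume "U a = U b"
    then have "norm (U (a - b)) = 0" by (simp add: bclin_diff[OF bc])
    then show "a = b" by (simp add: n)
  qed
  show "adjoint U (U x) = x" for x by (simp add: 1 inv_f_f[OF inj])
  show "bounded_clinear (adjoint U)" by (rule adjoint_bclin[OF bc])
  show "norm (adjoint U y) = norm y" for y using n[of "adjoint U y"] by (simp add: 1 Ui)
qed


typedef (overloaded) 'a endo = "UNIV :: ('a::real_normed_vector \<Rightarrow>\<^sub>L 'a) set"
  morphisms bl Endo by simp

setup_lifting type_definition_endo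

instantiation endo :: (real_normed_vector) real_normed_vector
begin

lift_definition norm_endo :: "'a endo \<Rightarrow> real" is norm .
lift_definition minus_endo :: "'a endo \<Rightarrow> 'a endo \<Rightarrow> 'a endo" is "(-)" .
lift_definition uminus_endo :: "'a endo \<Rightarrow> 'a endo" is uminus .
lift_definition zero_endo :: "'a endo" is 0 .
lift_definition plus_endo :: "'a endo \<Rightarrow> 'a endo \<Rightarrow> 'a endo" is "(+)" .
lift_definition scaleR_endo :: "real \<Rightarrow> 'a endo \<Rightarrow> 'a endo" is scaleR .

definition dist_endo :: "'a endo \<Rightarrow> 'a endo \<Rightarrow> real"
  where "dist_endo a b = norm (a - b)"

definition uniformity_endo :: "('a endo \<times> 'a endo) filter"
  where "uniformity_endo = (INF e\<in>{0 <..}. principal {(x, y). dist x y < e})"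

definition open_endo :: "'a endo set \<Rightarrow> bool"
  where "open_endo S = (\<forall>x\<in>S. \<forall>\<^sub>F (x', y) in uniformity. x' = x \<longrightarrow> y \<in> S)"

definition sgn_endo :: "'a endo \<Rightarrow> 'a endo"
  where "sgn_endo x = scaleR (inverse (norm x)) x"

instance
  apply standard
  unfolding dist_endo_def open_endo_def sgn_endo_def uniformity_endo_def
  apply (rule refl | (transfer, force simp: norm_triangle_ineq algebra_simps scaleR_add_right scaleR_add_left))+
  done

end

instantiation endo :: (real_normed_vector) "{real_normed_algebra, monoid_mult}"
begin

lift_definition times_endo :: "'a endo \<Rightarrow> 'a endo \<Rightarrow> 'a endo" is "\<lambda>f g. f o\<^sub>L g" .
lift_definition one_endo :: "'a endo" is "id_blinfun" .

instance
proof
  fix a b c :: "'a endo" and r :: real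
  show "a * b * c = a * (b * c)" by transfer (rule blinfun_eqI, simp)
  show "(a + b) * c = a * c + b * c" by transfer (rule blinfun_eqI, simp add: blinfun.add_left)
  show "a * (b + c) = a * b + a * c" by transfer (rule blinfun_eqI, simp add: blinfun.add_left blinfun.add_right)
  show "r *\<^sub>R a * b = r *\<^sub>R (a * b)" by transfer (rule blinfun_eqI, simp add: blinfun.scaleR_left)
  show "a * r *\<^sub>R b = r *\<^sub>R (a * b)" by transfer (rule blinfun_eqI, simp add: blinfun.scaleR_left blinfun.scaleR_right)
  show "norm (a * b) \<le> norm a * norm b" by transfer (rule norm_blinfun_compose)
  show "1 * a = a" by transfer (rule blinfun_eqI, simp)
  show "a * 1 = a" by transfer (rule blinfun_eqI, simp)
qed

end

lemma endo_tendsto_iff: "(X \<longlongrightarrow> L) F \<longleftrightarrow> ((\<lambda>n. bl (X n)) \<longlongrightarrow> bl L) F"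
  unfolding tendsto_iff dist_endo_def dist_norm
  by (simp add: norm_endo.rep_eq minus_endo.rep_eq)

instance endo :: (banach) banach
proof
  fix X :: "nat \<Rightarrow> 'a endo"
  assume "Cauchy X"
  then have "Cauchy (\<lambda>n. bl (X n))"
    unfolding Cauchy_def dist_endo_def dist_norm by (simp add: norm_endo.rep_eq minus_endo.rep_eq)
  then obtain L where "(\<lambda>n. bl (X n)) \<longlonglongrightarrow> L" using Cauchy_convergent_iff convergent_def by blast
  then have "X \<longlonglongrightarrow> Endo L" by (simp add: endo_tendsto_iff Endo_inverse)
  then show "convergent X" by (rule convergentI)
qed

definition app :: "'a::real_normed_vector endo \<Rightarrow> 'a \<Rightarrow> 'a" where
  "app A x = blinfun_apply (bl A) x"

lemma app_simps:
  "app (A + B) x = app A x + app B x"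
  "app (A - B) x = app A x - app B x"
  "app (A * B) x = app A (app B x)"
  "app 1 x = x"
  "app 0 x = 0"
  "app (r *\<^sub>R A) x = r *\<^sub>R app A x"
  "app (- A) x = - app A x"
  unfolding app_def
  by (simp_all add: plus_endo.rep_eq minus_endo.rep_eq times_endo.rep_eq one_endo.rep_eq
      zero_endo.rep_eq scaleR_endo.rep_eq uminus_endo.rep_eq blinfun.add_left blinfun.diff_left
      blinfun.scaleR_left blinfun.minus_left)

lemma norm_app: "norm (app A x) \<le> norm A * norm x"
  unfolding app_def norm_endo.rep_eq by (rule norm_blinfun)

lemma app_linear: "bounded_linear (app A)"
  unfolding app_def by (rule blinfun.bounded_linear_right)

lemma app_bilinear: "bounded_linear (\<lambda>A. app A x)"
proof -
  have "bounded_linear (\<lambda>A. blinfun_apply (bl A) x)"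
  proof
    show "blinfun_apply (bl (A + B)) x = blinfun_apply (bl A) x + blinfun_apply (bl B) x" for A B
      by (simp add: plus_endo.rep_eq blinfun.add_left)
    show "blinfun_apply (bl (r *\<^sub>R A)) x = r *\<^sub>R blinfun_apply (bl A) x" for r A
      by (simp add: scaleR_endo.rep_eq blinfun.scaleR_left)
    show "\<exists>K. \<forall>A. norm (blinfun_apply (bl A) x) \<le> norm A * K"
      by (rule exI[of _ "norm x"]) (simp add: norm_endo.rep_eq norm_blinfun)
  qed
  then show ?thesis unfolding app_def .
qed

lemma endo_eqI: "(\<And>x. app A x = app B x) \<Longrightarrow> A = B"
  unfolding app_def by (metis bl_inject blinfun_eqI)

definition mkE :: "('a::real_normed_vector \<Rightarrow> 'a) \<Rightarrow> 'a endo" where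
  "mkE f = Endo (Blinfun f)"

lemma app_mkE: "bounded_linear f \<Longrightarrow> app (mkE f) = f"
  unfolding app_def mkE_def by (simp add: Endo_inverse bounded_linear_Blinfun_apply)

lemma norm_endo_bound: "0 \<le> b \<Longrightarrow> (\<And>x. norm (app A x) \<le> b * norm x) \<Longrightarrow> norm A \<le> b"
  unfolding app_def norm_endo.rep_eq by (rule norm_blinfun_bound)

lemma app_power_Suc: "app (A ^ Suc k) x = app A (app (A ^ k) x)"
  by (simp add: app_simps)


function cc :: "nat \<Rightarrow> real" where
  "cc n = (if n = 0 then 0 else if n = 1 then 1/2 else (1/2) * (\<Sum>i\<in>{1..<n}. cc i * cc (n - i)))"
  by auto
termination by (relation "Wellfounded.measure id") auto

declare cc.simps[simp del]

lemma cc_0: "cc 0 = 0" by (simp add: cc.simps)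
lemma cc_1: "cc (Suc 0) = 1/2" by (simp add: cc.simps)
lemma cc_ge2: "n \<ge> 2 \<Longrightarrow> cc n = (1/2) * (\<Sum>i\<in>{1..<n}. cc i * cc (n - i))"
  by (subst cc.simps) simp

lemma cc_nonneg: "cc n \<ge> 0"
proof (induction n rule: less_induct)
  case (less n)
  show ?case
  proof (cases "n \<ge> 2")
    case True
    have "(\<Sum>i\<in>{1..<n}. cc i * cc (n - i)) \<ge> 0"
      by (rule sum_nonneg) (use less in auto)
    then show ?thesis using cc_ge2[OF True] by simp
  next
    case False
    then have "n = 0 \<or> n = 1" by auto
    then show ?thesis by (auto simp: cc_0 cc_1)
  qed
qed

lemma cc_conv: "(\<Sum>i\<le>n. cc i * cc (n - i)) = 2 * cc n - (if n = 1 then 1 else 0)"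
proof (cases "n \<ge> 2")
  case True
  have "{..n} = insert 0 (insert n {1..<n})" using True by auto
  then have "(\<Sum>i\<le>n. cc i * cc (n - i)) = cc 0 * cc n + (cc n * cc 0 + (\<Sum>i\<in>{1..<n}. cc i * cc (n - i)))"
    using True by (simp add: sum.insert)
  then show ?thesis using True by (simp add: cc_0 cc_ge2)
next
  case False
  then have "n = 0 \<or> n = 1" by auto
  then show ?thesis by (auto simp: cc_0 cc_1)
qed

lemma cc_key:
  "(\<Sum>n\<in>{2..<N}. cc n) \<le> (1/2) * (\<Sum>k<N - 1. cc k)\<^sup>2"
proof -
  define S where "S = Sigma {2..<N} (\<lambda>n. {1..<n})"
  define g where "g = (\<lambda>(n::nat, i::nat). (i, n - i))"
  have "(\<Sum>n\<in>{2..<N}. cc n) = (\<Sum>n\<in>{2..<N}. (1/2) * (\<Sum>i\<in>{1..<n}. cc i * cc (n - i)))"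
    by (rule sum.cong) (auto simp: cc_ge2)
  also have "\<dots> = (1/2) * (\<Sum>n\<in>{2..<N}. \<Sum>i\<in>{1..<n}. cc i * cc (n - i))"
    by (simp add: sum_distrib_left)
  also have "(\<Sum>n\<in>{2..<N}. \<Sum>i\<in>{1..<n}. cc i * cc (n - i)) = (\<Sum>p\<in>S. cc (snd p) * cc (fst p - snd p))"
    unfolding S_def by (subst sum.Sigma) (auto simp: split_def)
  also have "\<dots> = (\<Sum>q\<in>g ` S. cc (fst q) * cc (snd q))"
  proof -
    have "inj_on g S" unfolding inj_on_def S_def g_def by auto
    from sum.reindex[OF this, of "\<lambda>q. cc (fst q) * cc (snd q)"] show ?thesis by (simp add: g_def case_prod_beta comp_def)
  qed
  also have "\<dots> \<le> (\<Sum>q\<in>{..<N-1} \<times> {..<N-1}. cc (fst q) * cc (snd q))"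
  proof (rule sum_mono2)
    show "finite ({..<N-1} \<times> {..<N-1})" by simp
    show "g ` S \<subseteq> {..<N-1} \<times> {..<N-1}" unfolding S_def g_def by auto
    show "0 \<le> cc (fst q) * cc (snd q)" for q by (simp add: cc_nonneg)
  qed
  also have "\<dots> = (\<Sum>k<N - 1. cc k)\<^sup>2"
    by (simp add: power2_eq_square sum_product sum.cartesian_product case_prod_beta)
  finally show ?thesis by simp
qed

lemma cc_psum_split: "N \<ge> 2 \<Longrightarrow> (\<Sum>k<N. cc k) = 1/2 + (\<Sum>n\<in>{2..<N}. cc n)"
proof -
  assume N: "N \<ge> 2"
  have "{..<N} = insert 0 (insert 1 {2..<N})" using N by auto
  then show ?thesis by (simp add: sum.insert cc_0 cc_1)
qed

lemma cc_psum_le: "(\<Sum>k<N. cc k) \<le> 1"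
proof (induction N rule: less_induct)
  case (less N)
  show ?case
  proof (cases "N \<ge> 2")
    case True
    have ih: "(\<Sum>k<N - 1. cc k) \<le> 1" using less[of "N - 1"] True by simp
    have nn: "(\<Sum>k<N - 1. cc k) \<ge> 0" by (simp add: sum_nonneg cc_nonneg)
    have "(\<Sum>k<N - 1. cc k)\<^sup>2 \<le> 1" using ih nn by (simp add: power_le_one)
    then show ?thesis using cc_psum_split[OF True] cc_key[of N] by linarith
  next
    case False
    then have "N = 0 \<or> N = 1" by auto
    then show ?thesis by (auto simp: cc_0)
  qed
qed

lemma cc_summable: "summable cc"
  by (rule summableI_nonneg_bounded[of _ 1]) (auto simp: cc_nonneg cc_psum_le)

lemma cc_suminf_le: "suminf cc \<le> 1"
  by (rule suminf_le_const[OF cc_summable]) (simp add: cc_psum_le)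


definition clin :: "'a::complex_hilbert endo \<Rightarrow> bool" where
  "clin A \<longleftrightarrow> (\<forall>a x. app A (a *\<^sub>C x) = a *\<^sub>C app A x)"

definition sa :: "'a::complex_hilbert endo \<Rightarrow> bool" where
  "sa A \<longleftrightarrow> (\<forall>x y. cinner (app A x) y = cinner x (app A y))"

lemma clin_one: "clin 1" by (simp add: clin_def app_simps)
lemma clin_add: "clin A \<Longrightarrow> clin B \<Longrightarrow> clin (A + B)"
  by (simp add: clin_def app_simps scaleC_add_right)
lemma clin_diff: "clin A \<Longrightarrow> clin B \<Longrightarrow> clin (A - B)"
  by (simp add: clin_def app_simps scaleC_diff_right)
lemma clin_mult: "clin A \<Longrightarrow> clin B \<Longrightarrow> clin (A * B)"
  by (simp add: clin_def app_simps)
lemma clin_scaleR: "clin A \<Longrightarrow> clin (r *\<^sub>R A)"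
  by (simp add: clin_def app_simps scaleR_scaleC scaleC_scaleR mult.commute)
lemma clin_power: "clin A \<Longrightarrow> clin (A ^ k)"
  by (induction k) (auto simp: clin_one clin_mult)

lemma app_suminf:
  assumes "summable F"
  shows "(\<lambda>k. app (F k) x) sums app (suminf F) x"
  using bounded_linear.sums[OF app_bilinear summable_sums[OF assms]] .

lemma clin_suminf:
  assumes "summable F" "\<And>k. clin (F k)"
  shows "clin (suminf F)"
  unfolding clin_def
proof (intro allI)
  fix a x
  have "(\<lambda>k. app (F k) (a *\<^sub>C x)) sums app (suminf F) (a *\<^sub>C x)" by (rule app_suminf[OF assms(1)])
  moreover have "(\<lambda>k. a *\<^sub>C app (F k) x) sums (a *\<^sub>C app (suminf F) x)"
    by (rule bounded_linear.sums[OF bounded_linear_scaleC app_suminf[OF assms(1)]])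
  moreover have "(\<lambda>k. app (F k) (a *\<^sub>C x)) = (\<lambda>k. a *\<^sub>C app (F k) x)"
    using assms(2) by (simp add: clin_def)
  ultimately show "app (suminf F) (a *\<^sub>C x) = a *\<^sub>C app (suminf F) x"
    using sums_unique2 by metis
qed

lemma sa_one: "sa 1" by (simp add: sa_def app_simps)
lemma sa_add: "sa A \<Longrightarrow> sa B \<Longrightarrow> sa (A + B)"
  by (simp add: sa_def app_simps cinner_add_left cinner_add_right)
lemma sa_diff: "sa A \<Longrightarrow> sa B \<Longrightarrow> sa (A - B)"
  by (simp add: sa_def app_simps cinner_diff_left cinner_diff_right)
lemma sa_scaleR: "sa A \<Longrightarrow> sa (r *\<^sub>R A)"
  by (simp add: sa_def app_simps cinner_scaleR_left cinner_scaleR_right)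
lemma sa_power: "sa A \<Longrightarrow> sa (A ^ k)"
proof (induction k)
  case 0 then show ?case by (simp add: sa_one)
next
  case (Suc k)
  have "cinner (app (A ^ Suc k) x) y = cinner x (app (A ^ Suc k) y)" for x y
  proof -
    have "cinner (app (A ^ Suc k) x) y = cinner (app A (app (A ^ k) x)) y" by (simp add: app_simps)
    also have "\<dots> = cinner (app (A ^ k) x) (app A y)" using Suc.prems by (simp add: sa_def)
    also have "\<dots> = cinner x (app (A ^ k) (app A y))" using Suc by (simp add: sa_def)
    also have "app (A ^ k) (app A y) = app (A ^ k * A) y" by (simp add: app_simps)
    also have "A ^ k * A = A ^ Suc k" by (simp add: power_commutes)
    finally show ?thesis .
  qed
  then show ?case by (simp add: sa_def)
qed

lemma sa_real: "sa A \<Longrightarrow> Im (cinner x (app A x)) = 0"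
  unfolding sa_def by (metis cinner_cnj_commute Im_complex_of_real Reals_cnj_iff complex_is_Real_iff)

lemma posbound:
  fixes T :: "'a::complex_hilbert \<Rightarrow> 'a"
  assumes lin: "bounded_linear T" and sa: "\<And>x y. cinner (T x) y = cinner x (T y)"
    and bnd: "\<And>v. norm (T v) \<le> M * norm v" and M: "M > 0"
    and pos: "\<And>z. 0 \<le> Re (cinner z (T z))"
  shows "(norm (T x))\<^sup>2 \<le> M * Re (cinner x (T x))"
proof -
  define t where "t = 1 / M"
  define v where "v = x - t *\<^sub>R T x"
  have Tv: "T v = T x - t *\<^sub>R T (T x)"
    using bounded_linear.linear[OF lin] by (simp add: v_def linear_diff linear_scale)
  have "cinner v (T v) = cinner x (T x) - complex_of_real t * cinner x (T (T x))
        - complex_of_real t * cinner (T x) (T x) + complex_of_real t * complex_of_real t * cinner (T x) (T (T x))"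
    apply (subst Tv) apply (subst v_def)
    by (simp add: cinner_diff_left cinner_diff_right cinner_scaleR_left cinner_scaleR_right algebra_simps)
  also have "cinner x (T (T x)) = cinner (T x) (T x)" by (simp add: sa)
  finally have e: "Re (cinner v (T v)) = Re (cinner x (T x)) - 2 * t * (norm (T x))\<^sup>2 + t * t * Re (cinner (T x) (T (T x)))"
    by (simp add: cinner_self_Re)
  have "Re (cinner (T x) (T (T x))) \<le> cmod (cinner (T x) (T (T x)))" by (rule complex_Re_le_cmod)
  also have "\<dots> \<le> norm (T x) * norm (T (T x))" by (rule cauchy_schwarz)
  also have "\<dots> \<le> norm (T x) * (M * norm (T x))" by (simp add: bnd mult_left_mono)
  finally have r: "Re (cinner (T x) (T (T x))) \<le> M * (norm (T x))\<^sup>2" by (simp add: power2_eq_square algebra_simps)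
  have tt: "t * t \<ge> 0" by simp
  have "0 \<le> Re (cinner x (T x)) - 2 * t * (norm (T x))\<^sup>2 + t * t * (M * (norm (T x))\<^sup>2)"
    using pos[of v] e mult_left_mono[OF r tt] by linarith
  also have "t * t * (M * (norm (T x))\<^sup>2) = t * (norm (T x))\<^sup>2" using M by (simp add: t_def)
  finally have "t * (norm (T x))\<^sup>2 \<le> Re (cinner x (T x))" by simp
  then have "(1 / M) * (norm (T x))\<^sup>2 \<le> Re (cinner x (T x))" by (simp add: t_def)
  then show ?thesis using M by (simp add: field_simps)
qed

lemma norm_one_endo: "norm (1 :: 'a::real_normed_vector endo) \<le> 1"
  by (rule norm_endo_bound) (auto simp: app_simps)

lemma norm_power_endo: "norm (A :: 'a::real_normed_vector endo) \<le> 1 \<Longrightarrow> norm (A ^ k) \<le> 1"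
proof (induction k)
  case 0 then show ?case by (simp add: norm_one_endo)
next
  case (Suc k)
  have "norm (A ^ Suc k) \<le> norm A * norm (A ^ k)" by (simp add: norm_mult_ineq)
  also have "\<dots> \<le> 1 * 1" using Suc by (intro mult_mono) auto
  finally show ?case by simp
qed


subclass (in complex_hilbert) banach ..

definition lam :: "('a::complex_hilbert \<Rightarrow> 'a) \<Rightarrow> real" where "lam P = norm (mkE P) + 1"
definition Aop :: "('a::complex_hilbert \<Rightarrow> 'a) \<Rightarrow> 'a endo" where "Aop P = 1 - (1 / lam P) *\<^sub>R mkE P"
definition Fop :: "('a::complex_hilbert \<Rightarrow> 'a) \<Rightarrow> 'a endo" where "Fop P = (\<Sum>k. cc k *\<^sub>R Aop P ^ k)"
definition Sop :: "('a::complex_hilbert \<Rightarrow> 'a) \<Rightarrow> 'a endo" where "Sop P = sqrt (lam P) *\<^sub>R (1 - Fop P)"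

lemma bl_cinner_app: "bounded_linear (\<lambda>B. cinner x (app B x))"
proof
  show "cinner x (app (B1 + B2) x) = cinner x (app B1 x) + cinner x (app B2 x)" for B1 B2
    by (simp add: app_simps cinner_add_right)
  show "cinner x (app (r *\<^sub>R B) x) = r *\<^sub>R cinner x (app B x)" for r B
    by (simp add: app_simps cinner_scaleR_right scaleR_conv_of_real)
  show "\<exists>K. \<forall>B. norm (cinner x (app B x)) \<le> norm B * K"
  proof (intro exI allI)
    fix B
    have "norm (cinner x (app B x)) \<le> norm x * norm (app B x)" by (rule cauchy_schwarz)
    also have "\<dots> \<le> norm x * (norm B * norm x)" by (simp add: mult_left_mono norm_app)
    finally show "norm (cinner x (app B x)) \<le> norm B * (norm x * norm x)" by (simp add: algebra_simps)
  qed
qed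

context
  fixes P :: "'a::complex_hilbert \<Rightarrow> 'a"
  assumes P: "positive_op P"
begin

lemma P_bc: "bounded_clinear P" using P by (simp add: positive_op_def)
lemma P_bl: "bounded_linear P" using bclin_linear[OF P_bc] .
lemma appP: "app (mkE P) = P" using app_mkE[OF P_bl] .
lemma lam_pos: "lam P > 0" by (simp add: lam_def add_nonneg_pos)

lemma appA: "app (Aop P) x = x - (1 / lam P) *\<^sub>R P x"
  by (simp add: Aop_def app_simps appP)

lemma clinA: "clin (Aop P)"
proof -
  have "clin (mkE P)" by (simp add: clin_def appP bclinD[OF P_bc])
  then show ?thesis unfolding Aop_def by (intro clin_diff clin_one clin_scaleR)
qed

lemma saA: "sa (Aop P)"
proof -
  have "sa (mkE P)" by (simp add: sa_def appP positive_selfadj[OF P])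
  then show ?thesis unfolding Aop_def by (intro sa_diff sa_one sa_scaleR)
qed

lemma A_bounds: "0 \<le> Re (cinner x (app (Aop P) x))" "Re (cinner x (app (Aop P) x)) \<le> (norm x)\<^sup>2"
proof -
  have e: "Re (cinner x (app (Aop P) x)) = (norm x)\<^sup>2 - (1 / lam P) * Re (cinner x (P x))"
    by (simp add: appA cinner_diff_right cinner_scaleR_right cinner_self_Re)
  have p0: "0 \<le> Re (cinner x (P x))" using P by (simp add: positive_op_def)
  have "Re (cinner x (P x)) \<le> cmod (cinner x (P x))" by (rule complex_Re_le_cmod)
  also have "\<dots> \<le> norm x * norm (P x)" by (rule cauchy_schwarz)
  also have "\<dots> \<le> norm x * (norm (mkE P) * norm x)"
    using norm_app[of "mkE P" x] by (simp add: appP mult_left_mono)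
  also have "\<dots> \<le> lam P * (norm x)\<^sup>2" by (simp add: lam_def power2_eq_square algebra_simps)
  finally have p1: "Re (cinner x (P x)) \<le> lam P * (norm x)\<^sup>2" .
  have "(1 / lam P) * Re (cinner x (P x)) \<le> (norm x)\<^sup>2" using p1 lam_pos by (simp add: field_simps)
  then show "0 \<le> Re (cinner x (app (Aop P) x))" using e by linarith
  have "0 \<le> (1 / lam P) * Re (cinner x (P x))" using p0 lam_pos by simp
  then show "Re (cinner x (app (Aop P) x)) \<le> (norm x)\<^sup>2" using e by linarith
qed

lemma normA: "norm (Aop P) \<le> 1"
proof (cases "norm (Aop P) = 0")
  case True then show ?thesis by simp
next
  case False
  define M where "M = norm (Aop P)"
  have M: "M > 0" using False by (simp add: M_def)
  have "norm (app (Aop P) x) \<le> sqrt M * norm x" for x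
  proof -
    have "(norm (app (Aop P) x))\<^sup>2 \<le> M * Re (cinner x (app (Aop P) x))"
    proof (rule posbound[OF app_linear])
      show "cinner (app (Aop P) x) y = cinner x (app (Aop P) y)" for x y using saA by (simp add: sa_def)
      show "norm (app (Aop P) v) \<le> M * norm v" for v by (simp add: M_def norm_app)
      show "M > 0" by (rule M)
      show "0 \<le> Re (cinner z (app (Aop P) z))" for z by (rule A_bounds)
    qed
    also have "\<dots> \<le> M * (norm x)\<^sup>2" using A_bounds(2) M by (simp add: mult_left_mono)
    also have "\<dots> = (sqrt M * norm x)\<^sup>2" using M by (simp add: power_mult_distrib)
    finally show ?thesis by (rule power2_le_imp_le) (use M in auto)
  qed
  then have "M \<le> sqrt M" unfolding M_def by (intro norm_endo_bound) auto
  then have "M * M \<le> sqrt M * sqrt M" using M by (intro mult_mono) auto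
  then have "M * M \<le> M" using M by simp
  then show ?thesis using M by (simp add: M_def)
qed

lemma sum_norms: "summable (\<lambda>k. norm (cc k *\<^sub>R Aop P ^ k))"
proof (rule summable_comparison_test[OF _ cc_summable])
  show "\<exists>N. \<forall>n\<ge>N. norm (norm (cc n *\<^sub>R Aop P ^ n)) \<le> cc n"
  proof (intro exI allI impI)
    fix n
    have "norm (cc n *\<^sub>R Aop P ^ n) = cc n * norm (Aop P ^ n)" by (simp add: cc_nonneg)
    also have "\<dots> \<le> cc n * 1" using norm_power_endo[OF normA] cc_nonneg by (rule mult_left_mono)
    finally show "norm (norm (cc n *\<^sub>R Aop P ^ n)) \<le> cc n" by simp
  qed
qed

lemma sumF: "summable (\<lambda>k. cc k *\<^sub>R Aop P ^ k)"
  using summable_norm_cancel[OF sum_norms] .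

lemma FF: "Fop P * Fop P = 2 *\<^sub>R Fop P - Aop P"
proof -
  let ?a = "\<lambda>k. cc k *\<^sub>R Aop P ^ k"
  have "(\<lambda>n. \<Sum>i\<le>n. ?a i * ?a (n - i)) sums (Fop P * Fop P)"
    unfolding Fop_def by (rule Cauchy_product_sums[OF sum_norms sum_norms])
  moreover have "(\<Sum>i\<le>n. ?a i * ?a (n - i)) = (2 * cc n - (if n = 1 then 1 else 0)) *\<^sub>R Aop P ^ n" for n
  proof -
    have "(\<Sum>i\<le>n. ?a i * ?a (n - i)) = (\<Sum>i\<le>n. (cc i * cc (n - i)) *\<^sub>R Aop P ^ n)"
    proof (rule sum.cong)
      fix i assume "i \<in> {..n}"
      then have "Aop P ^ i * Aop P ^ (n - i) = Aop P ^ n" by (simp flip: power_add)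
      then show "?a i * ?a (n - i) = (cc i * cc (n - i)) *\<^sub>R Aop P ^ n" by simp
    qed simp
    also have "\<dots> = (\<Sum>i\<le>n. cc i * cc (n - i)) *\<^sub>R Aop P ^ n" by (simp add: scaleR_sum_left)
    finally show ?thesis by (simp add: cc_conv)
  qed
  ultimately have s1: "(\<lambda>n. (2 * cc n - (if n = 1 then 1 else 0)) *\<^sub>R Aop P ^ n) sums (Fop P * Fop P)" by simp
  have "(\<lambda>n. 2 *\<^sub>R ?a n) sums (2 *\<^sub>R Fop P)"
    unfolding Fop_def by (rule sums_scaleR_right[OF summable_sums[OF sumF]])
  moreover have "(\<lambda>n. if n = 1 then Aop P ^ n else 0) sums (Aop P ^ 1)" by (rule sums_single)
  ultimately have "(\<lambda>n. 2 *\<^sub>R ?a n - (if n = 1 then Aop P ^ n else 0)) sums (2 *\<^sub>R Fop P - Aop P ^ 1)"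
    by (rule sums_diff)
  moreover have eqf: "(\<lambda>n. 2 *\<^sub>R ?a n - (if n = 1 then Aop P ^ n else 0)) =
                 (\<lambda>n. (2 * cc n - (if n = 1 then 1 else 0)) *\<^sub>R Aop P ^ n)"
    by (auto simp: algebra_simps)
  ultimately have "(\<lambda>n. (2 * cc n - (if n = 1 then 1 else 0)) *\<^sub>R Aop P ^ n) sums (2 *\<^sub>R Fop P - Aop P)"
    by (simp only: eqf power_one_right)
  with s1 show ?thesis by (rule sums_unique2)
qed

lemma SS: "Sop P * Sop P = mkE P"
proof -
  have "Sop P * Sop P = (sqrt (lam P) * sqrt (lam P)) *\<^sub>R ((1 - Fop P) * (1 - Fop P))"
    by (simp add: Sop_def)
  also have "sqrt (lam P) * sqrt (lam P) = lam P" using lam_pos by simp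
  also have "(1 - Fop P) * (1 - Fop P) = 1 - 2 *\<^sub>R Fop P + Fop P * Fop P"
    by (simp add: algebra_simps scaleR_2)
  also have "\<dots> = 1 - Aop P" by (simp add: FF)
  also have "\<dots> = (1 / lam P) *\<^sub>R mkE P" by (simp add: Aop_def)
  finally show ?thesis using lam_pos by simp
qed

lemma clinS: "clin (Sop P)"
  unfolding Sop_def Fop_def
  by (intro clin_scaleR clin_diff clin_one clin_suminf[OF sumF] clin_power clinA)

lemma F_form: "Im (cinner x (app (Fop P) x)) = 0 \<and> Re (cinner x (app (Fop P) x)) \<le> (norm x)\<^sup>2"
proof -
  let ?a = "\<lambda>k. cc k *\<^sub>R Aop P ^ k"
  have s: "(\<lambda>k. cinner x (app (?a k) x)) sums cinner x (app (Fop P) x)"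
    unfolding Fop_def by (rule bounded_linear.sums[OF bl_cinner_app summable_sums[OF sumF]])
  have trm: "cinner x (app (?a k) x) = complex_of_real (cc k) * cinner x (app (Aop P ^ k) x)" for k
    by (simp add: app_simps cinner_scaleR_right)
  have im0: "Im (cinner x (app (Aop P ^ k) x)) = 0" for k by (rule sa_real[OF sa_power[OF saA]])
  have "(\<lambda>k. Im (cinner x (app (?a k) x))) sums Im (cinner x (app (Fop P) x))"
    by (rule bounded_linear.sums[OF bounded_linear_Im s])
  moreover have "(\<lambda>k. Im (cinner x (app (?a k) x))) = (\<lambda>k. 0)" by (simp add: trm im0)
  ultimately have 1: "Im (cinner x (app (Fop P) x)) = 0" using sums_zero sums_unique2 by metis
  have sr: "(\<lambda>k. Re (cinner x (app (?a k) x))) sums Re (cinner x (app (Fop P) x))"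
    by (rule bounded_linear.sums[OF bounded_linear_Re s])
  have sb: "(\<lambda>k. cc k * (norm x)\<^sup>2) sums (suminf cc * (norm x)\<^sup>2)"
    by (rule sums_mult2[OF summable_sums[OF cc_summable]])
  have le: "Re (cinner x (app (?a k) x)) \<le> cc k * (norm x)\<^sup>2" for k
  proof -
    have "Re (cinner x (app (Aop P ^ k) x)) \<le> cmod (cinner x (app (Aop P ^ k) x))" by (rule complex_Re_le_cmod)
    also have "\<dots> \<le> norm x * norm (app (Aop P ^ k) x)" by (rule cauchy_schwarz)
    also have "\<dots> \<le> norm x * (norm (Aop P ^ k) * norm x)" by (simp add: mult_left_mono norm_app)
    also have "\<dots> \<le> norm x * (1 * norm x)"
      using norm_power_endo[OF normA, of k] by (intro mult_left_mono mult_right_mono) auto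
    finally have "Re (cinner x (app (Aop P ^ k) x)) \<le> (norm x)\<^sup>2" by (simp add: power2_eq_square)
    then show ?thesis by (simp add: trm cc_nonneg mult_left_mono)
  qed
  have "Re (cinner x (app (Fop P) x)) \<le> suminf cc * (norm x)\<^sup>2" using sums_le[OF le sr sb] .
  also have "\<dots> \<le> 1 * (norm x)\<^sup>2" using cc_suminf_le by (intro mult_right_mono) auto
  finally show ?thesis using 1 by simp
qed

lemma posS: "positive_op (app (Sop P))"
  unfolding positive_op_def
proof (intro conjI allI)
  show "bounded_clinear (app (Sop P))" using clinS by (intro bclinI app_linear) (simp add: clin_def)
  fix x
  have e: "cinner x (app (Sop P) x) = complex_of_real (sqrt (lam P)) * (cinner x x - cinner x (app (Fop P) x))"
    by (simp add: Sop_def app_simps cinner_scaleR_right cinner_diff_right)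
  show "Im (cinner x (app (Sop P) x)) = 0" using F_form by (simp add: e cinner_self_Im)
  show "0 \<le> Re (cinner x (app (Sop P) x))" using F_form lam_pos by (simp add: e cinner_self_Re)
qed

lemma SS_fun: "app (Sop P) \<circ> app (Sop P) = P"
proof
  fix x show "(app (Sop P) \<circ> app (Sop P)) x = P x"
    using arg_cong[OF SS, of "\<lambda>B. app B x"] by (simp add: app_simps appP)
qed

lemma commute_S:
  assumes "X * mkE P = mkE P * X"
  shows "X * Sop P = Sop P * X"
proof -
  have XA: "X * Aop P = Aop P * X" using assms by (simp add: Aop_def algebra_simps)
  have XAk: "X * Aop P ^ k = Aop P ^ k * X" for k using power_commuting_commutes[OF XA[symmetric]] by simp
  have "X * Fop P = (\<Sum>k. X * (cc k *\<^sub>R Aop P ^ k))" unfolding Fop_def by (rule suminf_mult[OF sumF, symmetric])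
  also have "\<dots> = (\<Sum>k. (cc k *\<^sub>R Aop P ^ k) * X)" by (simp add: XAk)
  also have "\<dots> = Fop P * X" unfolding Fop_def by (rule suminf_mult2[OF sumF, symmetric])
  finally show ?thesis by (simp add: Sop_def algebra_simps)
qed

lemma sqrt_unique_S:
  assumes S: "positive_op S" and SSP: "S \<circ> S = P"
  shows "S = app (Sop P)"
proof -
  have Sbc: "bounded_clinear S" using S by (simp add: positive_op_def)
  define X where "X = mkE S"
  define Y where "Y = Sop P"
  have aX: "app X = S" unfolding X_def by (rule app_mkE[OF bclin_linear[OF Sbc]])
  have SSx: "P x = S (S x)" for x using SSP by auto
  have "X * mkE P = mkE P * X"
    by (rule endo_eqI) (simp add: app_simps aX appP SSx)
  then have XY: "X * Y = Y * X" unfolding Y_def by (rule commute_S)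
  have saX: "sa X" by (simp add: sa_def aX positive_selfadj[OF S])
  have saY: "sa Y" by (simp add: sa_def Y_def positive_selfadj[OF posS])
  have XX: "X * X = mkE P" by (rule endo_eqI) (simp add: app_simps aX appP SSx)
  have YY: "Y * Y = mkE P" by (simp add: Y_def SS)
  define D where "D = X - Y"
  define E where "E = X + Y"
  have ED: "E * D = 0" unfolding D_def E_def using XX YY XY by (simp add: algebra_simps)
  have posX: "0 \<le> Re (cinner z (app X z))" for z using S by (simp add: aX positive_op_def)
  have posY: "0 \<le> Re (cinner z (app Y z))" for z using posS by (simp add: Y_def positive_op_def)
  have kill: "app B y = 0" if "sa B" "\<And>z. 0 \<le> Re (cinner z (app B z))" "Re (cinner y (app B y)) = 0" for B :: "'a endo" and y
  proof -
    have "(norm (app B y))\<^sup>2 \<le> (norm B + 1) * Re (cinner y (app B y))"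
    proof (rule posbound[OF app_linear])
      show "cinner (app B x) z = cinner x (app B z)" for x z using that(1) by (simp add: sa_def)
      show "norm (app B v) \<le> (norm B + 1) * norm v" for v
        using norm_app[of B v] by (smt (verit) mult_right_mono norm_ge_zero)
    qed (use that in \<open>auto simp: add_nonneg_pos\<close>)
    then show ?thesis using that(3) by simp
  qed
  have "app X x = app Y x" for x
  proof -
    define y where "y = app D x"
    have "cinner y (app X y) + cinner y (app Y y) = cinner y (app E y)"
      by (simp add: E_def app_simps cinner_add_right)
    also have "\<dots> = cinner y (app (E * D) x)" by (simp add: y_def app_simps)
    also have "\<dots> = 0" by (simp add: ED app_simps)
    finally have "Re (cinner y (app X y)) + Re (cinner y (app Y y)) = 0"
      by (metis plus_complex.sel(1) zero_complex.sel(1))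
    then have "Re (cinner y (app X y)) = 0" "Re (cinner y (app Y y)) = 0"
      using posX[of y] posY[of y] by linarith+
    then have "app X y = 0" "app Y y = 0" using kill saX saY posX posY by blast+
    then have "app D (app D x) = 0" by (simp add: D_def y_def app_simps)
    then have "cinner (app D x) (app D x) = 0"
      using sa_diff[OF saX saY] by (simp add: D_def[symmetric] sa_def)
    then have "app D x = 0" by (simp add: cinner_self_norm)
    then show ?thesis by (simp add: D_def app_simps)
  qed
  then show ?thesis using aX by (auto simp: Y_def)
qed

lemma op_sqrt_eq: "op_sqrt P = app (Sop P)"
  unfolding op_sqrt_def
proof (rule the_equality)
  show "positive_op (app (Sop P)) \<and> app (Sop P) \<circ> app (Sop P) = P" using posS SS_fun by simp
  show "S = app (Sop P)" if "positive_op S \<and> S \<circ> S = P" for S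
    using sqrt_unique_S that by blast
qed

end

lemma op_sqrt_props:
  assumes "positive_op P"
  shows "positive_op (op_sqrt P)" "op_sqrt P \<circ> op_sqrt P = P"
  using op_sqrt_eq[OF assms] posS[OF assms] SS_fun[OF assms] by auto

lemma op_sqrt_unique:
  assumes S: "positive_op S" and "S \<circ> S = P"
  shows "op_sqrt P = S"
proof -
  have Sbc: "bounded_clinear S" using S by (simp add: positive_op_def)
  have "positive_op P"
    unfolding positive_op_def
  proof (intro conjI allI)
    show "bounded_clinear P" using bclin_comp[OF Sbc Sbc] assms(2) by simp
    fix x
    have "cinner x (P x) = cinner (S x) (S x)" using assms(2) positive_selfadj[OF S] by auto
    then show "Im (cinner x (P x)) = 0" "0 \<le> Re (cinner x (P x))" by (simp_all add: cinner_self_norm)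
  qed
  then show ?thesis using op_sqrt_eq sqrt_unique_S assms by metis
qed


lemma TT_pos:
  fixes T :: "'a::complex_hilbert \<Rightarrow> 'b::complex_hilbert"
  assumes "bounded_clinear T"
  shows "positive_op (adjoint T \<circ> T)"
  unfolding positive_op_def
proof (intro conjI allI)
  show "bounded_clinear (adjoint T \<circ> T)" by (rule bclin_comp[OF adjoint_bclin[OF assms] assms])
  fix x
  have "cinner x ((adjoint T \<circ> T) x) = cinner (T x) (T x)" by (simp add: adjoint_char[OF assms])
  then show "Im (cinner x ((adjoint T \<circ> T) x)) = 0" "0 \<le> Re (cinner x ((adjoint T \<circ> T) x))"
    by (simp_all add: cinner_self_norm)
qed

lemma abs_props:
  fixes T :: "'a::complex_hilbert \<Rightarrow> 'b::complex_hilbert"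
  assumes "bounded_clinear T"
  shows "positive_op (op_abs T)" "op_abs T \<circ> op_abs T = adjoint T \<circ> T"
  unfolding op_abs_def using op_sqrt_props[OF TT_pos[OF assms]] by auto

lemma abs_norm:
  fixes T :: "'a::complex_hilbert \<Rightarrow> 'b::complex_hilbert"
  assumes "bounded_clinear T"
  shows "norm (op_abs T x) = norm (T x)"
proof -
  note p = abs_props[OF assms]
  have "(norm (op_abs T x))\<^sup>2 = Re (cinner (op_abs T x) (op_abs T x))" by (simp add: cinner_self_Re)
  also have "\<dots> = Re (cinner x (op_abs T (op_abs T x)))" by (simp add: positive_selfadj[OF p(1)])
  also have "op_abs T (op_abs T x) = adjoint T (T x)" using p(2) by (metis comp_apply)
  also have "Re (cinner x (adjoint T (T x))) = (norm (T x))\<^sup>2"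
    by (simp add: adjoint_char[OF assms, symmetric] cinner_self_Re)
  finally show ?thesis by (simp add: power2_eq_iff_nonneg)
qed

lemma abs_key:
  fixes T1 :: "'a::complex_hilbert \<Rightarrow> 'a" and T2 :: "'b::complex_hilbert \<Rightarrow> 'b" and U :: "'a \<Rightarrow> 'b"
  assumes T1: "bounded_clinear T1" and T2: "bounded_clinear T2" and U: "unitary U"
  shows "op_abs T1 = adjoint U \<circ> op_abs T2 \<circ> U \<longleftrightarrow> (\<forall>x. norm (T1 x) = norm (T2 (U x)))"
proof
  assume eq: "op_abs T1 = adjoint U \<circ> op_abs T2 \<circ> U"
  show "\<forall>x. norm (T1 x) = norm (T2 (U x))"
  proof
    fix x
    have "norm (T1 x) = norm (op_abs T1 x)" by (simp add: abs_norm[OF T1])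
    also have "\<dots> = norm (adjoint U (op_abs T2 (U x)))" by (simp add: eq)
    also have "\<dots> = norm (op_abs T2 (U x))" by (simp add: unitary_adjoint(5)[OF U])
    also have "\<dots> = norm (T2 (U x))" by (simp add: abs_norm[OF T2])
    finally show "norm (T1 x) = norm (T2 (U x))" .
  qed
next
  assume n: "\<forall>x. norm (T1 x) = norm (T2 (U x))"
  have Ubc: "bounded_clinear U" using U by (simp add: unitary_def)
  note ua = unitary_adjoint[OF U]
  note p2 = abs_props[OF T2]
  define S where "S = adjoint U \<circ> op_abs T2 \<circ> U"
  have Spos: "positive_op S"
    unfolding positive_op_def
  proof (intro conjI allI)
    have "bounded_clinear (op_abs T2)" using p2(1) by (simp add: positive_op_def)
    then show "bounded_clinear S" unfolding S_def by (intro bclin_comp ua(4) Ubc)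
    fix x
    have "cinner x (S x) = cinner (U x) (op_abs T2 (U x))"
      by (simp add: S_def adjoint_char[OF Ubc, symmetric])
    then show "Im (cinner x (S x)) = 0" "0 \<le> Re (cinner x (S x))"
      using p2(1) by (simp_all add: positive_op_def)
  qed
  have pol: "cinner (T1 y) (T1 x) = cinner (T2 (U y)) (T2 (U x))" for x y
  proof (rule polarization[of T1 "T2 \<circ> U", simplified])
    show "T1 (a + b) = T1 a + T1 b" for a b by (simp add: bclinD[OF T1])
    show "T1 (c *\<^sub>C a) = c *\<^sub>C T1 a" for c a by (simp add: bclinD[OF T1])
    show "T2 (U (a + b)) = T2 (U a) + T2 (U b)" for a b by (simp add: bclinD[OF T2] bclinD[OF Ubc])
    show "T2 (U (c *\<^sub>C a)) = c *\<^sub>C T2 (U a)" for c a by (simp add: bclinD[OF T2] bclinD[OF Ubc])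
    show "norm (T1 a) = norm (T2 (U a))" for a using n by simp
  qed
  have "S \<circ> S = adjoint T1 \<circ> T1"
  proof
    fix x
    have "S (S x) = adjoint U (op_abs T2 (op_abs T2 (U x)))" by (simp add: S_def ua(2))
    also have "op_abs T2 (op_abs T2 (U x)) = adjoint T2 (T2 (U x))" using p2(2) by (metis comp_apply)
    also have "adjoint U (adjoint T2 (T2 (U x))) = adjoint T1 (T1 x)"
    proof (rule cinner_eqI)
      fix y
      show "cinner y (adjoint U (adjoint T2 (T2 (U x)))) = cinner y (adjoint T1 (T1 x))"
        by (simp add: adjoint_char[OF Ubc, symmetric] adjoint_char[OF T2, symmetric]
            adjoint_char[OF T1, symmetric] pol)
    qed
    finally show "(S \<circ> S) x = (adjoint T1 \<circ> T1) x" by simp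
  qed
  then have "op_sqrt (adjoint T1 \<circ> T1) = S" by (rule op_sqrt_unique[OF Spos])
  then show "op_abs T1 = adjoint U \<circ> op_abs T2 \<circ> U" by (simp add: op_abs_def S_def)
qed


lemma dense_eq:
  fixes p q :: "'a::real_normed_vector \<Rightarrow> 'b::real_normed_vector"
  assumes "continuous_on UNIV p" "continuous_on UNIV q" "\<And>y. y \<in> X \<Longrightarrow> p y = q y" "closure X = UNIV"
  shows "p y = q y"
proof -
  have "closed {x. p x = q x}" by (rule closed_Collect_eq[OF assms(1,2)])
  moreover have "X \<subseteq> {x. p x = q x}" using assms(3) by auto
  ultimately have "closure X \<subseteq> {x. p x = q x}" by (rule closure_minimal[rotated])
  then show ?thesis using assms(4) by auto
qed

lemma bclin_cont: "bounded_clinear T \<Longrightarrow> continuous_on S T"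
  by (rule linear_continuous_on[OF bclin_linear])

lemma dense_comp:
  fixes f :: "'a::real_normed_vector \<Rightarrow> 'b::real_normed_vector"
  assumes "continuous_on UNIV f" "closure (range f) = UNIV" "closure (range g) = UNIV"
  shows "closure (range (f \<circ> g)) = UNIV"
proof -
  have "f ` closure (range g) \<subseteq> closure (f ` range g)"
    by (rule image_closure_subset[OF continuous_on_subset[OF assms(1)]]) (auto intro: closure_subset[THEN subsetD])
  then have "range f \<subseteq> closure (range (f \<circ> g))" using assms(3) by (simp add: image_comp)
  then have "closure (range f) \<subseteq> closure (range (f \<circ> g))" by (metis closure_closure closure_mono)
  then show ?thesis using assms(2) by auto
qed

lemma extend_unitary:
  fixes A :: "'a::complex_hilbert \<Rightarrow> 'a" and B :: "'a \<Rightarrow> 'b::complex_hilbert"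
  assumes A: "bounded_clinear A" and B: "bounded_clinear B"
    and dA: "closure (range A) = UNIV" and dB: "closure (range B) = UNIV"
    and n: "\<And>x. norm (A x) = norm (B x)"
  shows "\<exists>U. unitary U \<and> (\<forall>x. U (A x) = B x)"
proof -
  define X where "X = range A"
  define f0 where "f0 y = B (inv A y)" for y
  have wd: "B x = B x'" if "A x = A x'" for x x'
  proof -
    have "norm (B (x - x')) = 0" using n[of "x - x'"] that by (simp add: bclin_diff[OF A])
    then show ?thesis by (simp add: bclin_diff[OF B])
  qed
  have f0A: "f0 (A x) = B x" for x
    unfolding f0_def by (rule wd) (meson f_inv_into_f rangeI)
  have "uniformly_continuous_on X f0"
    unfolding uniformly_continuous_on_def
  proof (intro allI impI)
    fix e :: real assume "e > 0"
    show "\<exists>d>0. \<forall>x\<in>X. \<forall>x'\<in>X. dist x' x < d \<longrightarrow> dist (f0 x') (f0 x) < e"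
    proof (intro exI[of _ e] conjI ballI impI)
      fix y y' assume "y \<in> X" "y' \<in> X" "dist y' y < e"
      then obtain x x' where "y = A x" "y' = A x'" by (auto simp: X_def)
      then show "dist (f0 y') (f0 y) < e" using \<open>dist y' y < e\<close>
        by (simp add: f0A dist_norm bclin_diff[OF A, symmetric] bclin_diff[OF B, symmetric] n)
    qed (fact \<open>e > 0\<close>)
  qed
  then obtain g where g: "uniformly_continuous_on (closure X) g" "\<And>y. y \<in> X \<Longrightarrow> f0 y = g y"
    by (rule uniformly_continuous_on_extension_on_closure) blast
  have gc: "continuous_on UNIV g" using g(1) dA unfolding X_def
    by (simp add: uniformly_continuous_imp_continuous)
  have gA: "g (A x) = B x" for x using g(2)[of "A x"] f0A by (simp add: X_def)
  have dX: "closure X = UNIV" using dA by (simp add: X_def)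
  have gn: "norm (g y) = norm y" for y
    by (rule dense_eq[of "\<lambda>y. norm (g y)" norm X, OF _ _ _ dX])
       (auto intro!: continuous_intros gc simp: X_def gA n)
  have gadd1: "g (a + y) = g a + g y" if "a \<in> X" for a y
  proof (rule dense_eq[OF _ _ _ dX])
    show "continuous_on UNIV (\<lambda>y. g (a + y))"
      by (rule continuous_on_compose2[OF gc]) (auto intro!: continuous_intros)
    show "continuous_on UNIV (\<lambda>y. g a + g y)" by (intro continuous_intros gc)
    show "g (a + y) = g a + g y" if "y \<in> X" for y
      using \<open>a \<in> X\<close> that by (auto simp: X_def gA bclinD[OF A, symmetric] bclinD[OF B])
  qed
  have gadd: "g (a + y) = g a + g y" for a y
  proof (rule dense_eq[of "\<lambda>a. g (a + y)" _ X, OF _ _ _ dX])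
    show "continuous_on UNIV (\<lambda>a. g (a + y))"
      by (rule continuous_on_compose2[OF gc]) (auto intro!: continuous_intros)
    show "continuous_on UNIV (\<lambda>a. g a + g y)" by (intro continuous_intros gc)
    show "g (a + y) = g a + g y" if "a \<in> X" for a using gadd1[OF that] .
  qed
  have ghom: "g (c *\<^sub>C y) = c *\<^sub>C g y" for c y
  proof (rule dense_eq[of "\<lambda>y. g (c *\<^sub>C y)" _ X, OF _ _ _ dX])
    show "continuous_on UNIV (\<lambda>y. g (c *\<^sub>C y))"
      by (rule continuous_on_compose2[OF gc]) (auto intro!: linear_continuous_on bounded_linear_scaleC)
    show "continuous_on UNIV (\<lambda>y. c *\<^sub>C g y)"
      by (rule continuous_on_compose2[OF linear_continuous_on[OF bounded_linear_scaleC] gc]) auto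
    show "g (c *\<^sub>C y) = c *\<^sub>C g y" if "y \<in> X" for y
      using that by (auto simp: X_def gA bclinD[OF A, symmetric] bclinD[OF B])
  qed
  have gbc: "bounded_clinear g" unfolding bounded_clinear_def
    using gadd ghom gn by (auto intro!: exI[of _ 1])
  have "complete (g ` UNIV)"
  proof (rule complete_isometric_image[of 1])
    show "subspace (UNIV :: 'a set)" by simp
    show "bounded_linear g" by (rule bclin_linear[OF gbc])
    show "\<forall>x\<in>UNIV. norm (g x) \<ge> 1 * norm x" by (simp add: gn)
    show "complete (UNIV :: 'a set)" by (simp add: complete_UNIV)
  qed simp
  then have "closed (range g)" by (rule complete_imp_closed)
  moreover have "range B \<subseteq> range g" by (auto simp: gA[symmetric])
  ultimately have "closure (range B) \<subseteq> range g" by (rule closure_minimal[rotated])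
  then have "surj g" using dB by auto
  then have "unitary g" using gbc gn by (simp add: unitary_def)
  then show ?thesis using gA by blast
qed


definition single :: "nat \<Rightarrow> 'a::complex_hilbert \<Rightarrow> nat \<Rightarrow> 'a" where
  "single k x = (\<lambda>n. if n = k then x else 0)"

lemma single_norm_sums: "(\<lambda>n. (norm (single k x n))\<^sup>2) sums (norm x)\<^sup>2"
proof -
  have "(\<lambda>n. (norm (single k x n))\<^sup>2) = (\<lambda>n. if n = k then (\<lambda>_. (norm x)\<^sup>2) n else 0)"
    by (auto simp: single_def)
  then show ?thesis using sums_single[of k "\<lambda>_. (norm x)\<^sup>2"] by simp
qed

lemma single_l2: "single k x \<in> l2seq"
  unfolding l2seq_def using sums_summable[OF single_norm_sums[of k x]] by simp

lemma l2norm_single: "l2norm (single k x) = norm x"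
proof -
  have "(\<Sum>n. (norm (single k x n))\<^sup>2) = (norm x)\<^sup>2" by (rule sums_unique[OF single_norm_sums, symmetric])
  then show ?thesis by (simp add: l2norm_def)
qed

lemma l2norm_sums: "h \<in> l2seq \<Longrightarrow> (\<lambda>n. (norm (h n))\<^sup>2) sums (l2norm h)\<^sup>2"
proof -
  assume "h \<in> l2seq"
  then have s: "summable (\<lambda>n. (norm (h n))\<^sup>2)" by (simp add: l2seq_def)
  have "0 \<le> (\<Sum>n. (norm (h n))\<^sup>2)" by (rule suminf_nonneg[OF s]) simp
  then show ?thesis using summable_sums[OF s] by (simp add: l2norm_def)
qed

lemma l2_add:
  assumes "h \<in> l2seq" "g \<in> l2seq"
  shows "(\<lambda>n. h n + g n) \<in> l2seq"
proof -
  have s1: "summable (\<lambda>n. 2 * (norm (h n))\<^sup>2 + 2 * (norm (g n))\<^sup>2)"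
    using assms by (auto simp: l2seq_def intro!: summable_add summable_mult)
  have bd: "norm ((norm (h n + g n))\<^sup>2) \<le> 2 * (norm (h n))\<^sup>2 + 2 * (norm (g n))\<^sup>2" for n
  proof -
    have "norm (h n + g n) \<le> norm (h n) + norm (g n)" by (rule norm_triangle_ineq)
    then have "(norm (h n + g n))\<^sup>2 \<le> (norm (h n) + norm (g n))\<^sup>2" by (simp add: power_mono)
    also have "\<dots> \<le> 2 * (norm (h n))\<^sup>2 + 2 * (norm (g n))\<^sup>2"
      by (smt (verit) sum_squares_bound zero_le_power2 power2_sum)
    finally show ?thesis by simp
  qed
  have "summable (\<lambda>n. (norm (h n + g n))\<^sup>2)"
    by (rule summable_comparison_test'[OF s1, where N=0]) (rule bd)
  then show ?thesis unfolding l2seq_def by simp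
qed

lemma sw_bclin: "shift_weights_dense W \<Longrightarrow> bounded_clinear (W n)"
  by (simp add: shift_weights_dense_def)

lemma sw_dense: "shift_weights_dense W \<Longrightarrow> closure (range (W n)) = UNIV"
  by (simp add: shift_weights_dense_def)

lemma wshift_l2:
  assumes sw: "shift_weights_dense W" and h: "h \<in> l2seq"
  shows "wshift W h \<in> l2seq"
proof -
  obtain C where C: "\<And>n x. norm (W n x) \<le> C * norm x" using sw by (auto simp: shift_weights_dense_def)
  have s1: "summable (\<lambda>n. C\<^sup>2 * (norm (h n))\<^sup>2)" using h by (auto simp: l2seq_def intro: summable_mult)
  have bd: "norm ((norm (W n (h n)))\<^sup>2) \<le> C\<^sup>2 * (norm (h n))\<^sup>2" for n
  proof -
    have "(norm (W n (h n)))\<^sup>2 \<le> (C * norm (h n))\<^sup>2"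
      using C[of n "h n"] by (intro power_mono) auto
    then show ?thesis by (simp add: power_mult_distrib)
  qed
  have "summable (\<lambda>n. (norm (W n (h n)))\<^sup>2)"
    by (rule summable_comparison_test'[OF s1, where N=0]) (rule bd)
  then have "summable (\<lambda>n. (norm (wshift W h (Suc n)))\<^sup>2)" by (simp add: wshift_def)
  then show ?thesis unfolding l2seq_def using summable_Suc_iff[of "\<lambda>n. (norm (wshift W h n))\<^sup>2"] by blast
qed

lemma wshift_single:
  assumes sw: "shift_weights_dense W"
  shows "wshift W (single k y) = single (Suc k) (W k y)"
  by (auto simp: wshift_def single_def fun_eq_iff bclin_zero[OF sw_bclin[OF sw]] split: nat.split)

lemma wprod_bclin: assumes sw: "shift_weights_dense W" shows "bounded_clinear (wprod W i)"
proof (induction i)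
  case 0 then show ?case by (simp only: wprod.simps bclin_id)
next
  case (Suc i) show ?case unfolding wprod.simps by (rule bclin_comp[OF sw_bclin[OF sw] Suc.IH])
qed

lemma wprod_dense: assumes sw: "shift_weights_dense W" shows "closure (range (wprod W i)) = UNIV"
proof (induction i)
  case 0 then show ?case by simp
next
  case (Suc i)
  show ?case using dense_comp[OF bclin_cont[OF sw_bclin[OF sw]] sw_dense[OF sw] Suc.IH] by simp
qed

lemma supp_char:
  fixes W :: "nat \<Rightarrow> 'a::complex_hilbert \<Rightarrow> 'a" and h :: "nat \<Rightarrow> 'a"
  assumes sw: "shift_weights_dense W" and h: "h \<in> l2seq"
  shows "(\<forall>n>0. h n = 0) \<longleftrightarrow> (\<forall>g\<in>l2seq. l2norm h \<le> l2norm (\<lambda>n. h n + wshift W g n))"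
proof
  assume s: "\<forall>n>0. h n = 0"
  show "\<forall>g\<in>l2seq. l2norm h \<le> l2norm (\<lambda>n. h n + wshift W g n)"
  proof
    fix g :: "nat \<Rightarrow> 'a" assume g: "g \<in> l2seq"
    define q where "q = (\<lambda>n. h n + wshift W g n)"
    have q: "q \<in> l2seq" unfolding q_def by (rule l2_add[OF h wshift_l2[OF sw g]])
    have "h = single 0 (h 0)" using s by (auto simp: single_def fun_eq_iff)
    then have lh: "l2norm h = norm (h 0)" by (metis l2norm_single)
    have q0: "q 0 = h 0" by (simp add: q_def wshift_def)
    have sq: "summable (\<lambda>n. (norm (q n))\<^sup>2)" using q by (simp add: l2seq_def)
    have "(\<Sum>n\<in>{0}. (norm (q n))\<^sup>2) \<le> (\<Sum>n. (norm (q n))\<^sup>2)"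
      by (rule sum_le_suminf[OF sq]) auto
    then have "(norm (h 0))\<^sup>2 \<le> (\<Sum>n. (norm (q n))\<^sup>2)" by (simp add: q0)
    then have "sqrt ((norm (h 0))\<^sup>2) \<le> l2norm q" unfolding l2norm_def by (rule real_sqrt_le_mono)
    then show "l2norm h \<le> l2norm q" by (simp add: lh)
  qed
next
  assume R: "\<forall>g\<in>l2seq. l2norm h \<le> l2norm (\<lambda>n. h n + wshift W g n)"
  show "\<forall>n>0. h n = 0"
  proof (rule ccontr)
    assume "\<not> (\<forall>n>0. h n = 0)"
    then obtain m where m: "m > 0" "h m \<noteq> 0" by auto
    then obtain k where k: "m = Suc k" using gr0_implies_Suc by blast
    have "- h m \<in> closure (range (W k))" using sw_dense[OF sw] by simp
    then obtain z where "z \<in> range (W k)" "dist z (- h m) < norm (h m)"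
      using m(2) by (meson closure_approachable zero_less_norm_iff)
    then obtain y where y: "norm (h m + W k y) < norm (h m)"
      by (auto simp: dist_norm add.commute)
    define g where "g = single k y"
    have g: "g \<in> l2seq" by (simp add: g_def single_l2)
    define q where "q = (\<lambda>n. h n + wshift W g n)"
    have qn: "q n = (if n = m then h m + W k y else h n)" for n
      unfolding q_def g_def wshift_single[OF sw] by (simp add: single_def k)
    define d where "d = (norm (h m + W k y))\<^sup>2 - (norm (h m))\<^sup>2"
    have d: "d < 0" using y by (simp add: d_def power_strict_mono)
    have "(\<lambda>n. (norm (h n))\<^sup>2 + (if n = m then (\<lambda>_. d) n else 0)) sums ((l2norm h)\<^sup>2 + d)"
      by (rule sums_add[OF l2norm_sums[OF h] sums_single])
    moreover have "(\<lambda>n. (norm (h n))\<^sup>2 + (if n = m then (\<lambda>_. d) n else 0)) = (\<lambda>n. (norm (q n))\<^sup>2)"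
      by (auto simp: qn d_def)
    ultimately have "(\<lambda>n. (norm (q n))\<^sup>2) sums ((l2norm h)\<^sup>2 + d)" by simp
    moreover have "q \<in> l2seq" unfolding q_def by (rule l2_add[OF h wshift_l2[OF sw g]])
    ultimately have "(l2norm q)\<^sup>2 = (l2norm h)\<^sup>2 + d" using l2norm_sums sums_unique2 by metis
    then have "(l2norm q)\<^sup>2 < (l2norm h)\<^sup>2" using d by simp
    moreover have "l2norm h \<le> l2norm q" using R g by (simp add: q_def)
    moreover have "0 \<le> l2norm h" using h by (simp add: l2norm_def l2seq_def suminf_nonneg)
    ultimately show False by (meson not_le power_mono)
  qed
qed


lemma single_add: "single k (x + y) = (\<lambda>n. single k x n + single k y n)"
  by (auto simp: single_def)

lemma single_scaleC: "single k (a *\<^sub>C x) = (\<lambda>n. a *\<^sub>C single k x n)"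
  by (auto simp: single_def)

lemma supp_single: "(\<forall>n>0. h n = 0) \<Longrightarrow> h = single 0 (h 0)"
  by (auto simp: single_def)

lemma dir1:
  fixes W1 :: "nat \<Rightarrow> 'a::complex_hilbert \<Rightarrow> 'a" and W2 :: "nat \<Rightarrow> 'b::complex_hilbert \<Rightarrow> 'b"
  assumes sw1: "shift_weights_dense W1" and sw2: "shift_weights_dense W2"
    and ue: "unit_equiv_l2 (wshift W1) (wshift W2)"
  shows "\<exists>U0. unitary U0 \<and> (\<forall>i x. norm (wprod W1 i x) = norm (wprod W2 i (U0 x)))"
proof -
  obtain V where V: "unitary_l2 V" and comm: "\<And>h. h \<in> l2seq \<Longrightarrow> V (wshift W1 h) = wshift W2 (V h)"
    using ue unfolding unit_equiv_l2_def by blast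
  have Vl2: "\<And>h. h \<in> l2seq \<Longrightarrow> V h \<in> l2seq"
    and Vonto: "\<And>g. g \<in> l2seq \<Longrightarrow> \<exists>h\<in>l2seq. V h = g"
    and Vadd: "\<And>h g. h \<in> l2seq \<Longrightarrow> g \<in> l2seq \<Longrightarrow> V (\<lambda>n. h n + g n) = (\<lambda>n. V h n + V g n)"
    and Vhom: "\<And>a h. h \<in> l2seq \<Longrightarrow> V (\<lambda>n. a *\<^sub>C h n) = (\<lambda>n. a *\<^sub>C V h n)"
    and Vn: "\<And>h. h \<in> l2seq \<Longrightarrow> l2norm (V h) = l2norm h"
    using V unfolding unitary_l2_def by blast+
  have key: "l2norm (\<lambda>n. h n + wshift W1 g' n) = l2norm (\<lambda>n. V h n + wshift W2 (V g') n)"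
    if h: "h \<in> l2seq" and g': "g' \<in> l2seq" for h g'
  proof -
    have w: "wshift W1 g' \<in> l2seq" by (rule wshift_l2[OF sw1 g'])
    have "V (\<lambda>n. h n + wshift W1 g' n) = (\<lambda>n. V h n + wshift W2 (V g') n)"
      by (simp add: Vadd[OF h w] comm[OF g'])
    then show ?thesis using Vn[OF l2_add[OF h w]] by simp
  qed
  have transport: "(\<forall>n>0. h n = 0) \<longleftrightarrow> (\<forall>n>0. V h n = 0)" if h: "h \<in> l2seq" for h
  proof -
    have "(\<forall>g\<in>l2seq. l2norm h \<le> l2norm (\<lambda>n. h n + wshift W1 g n)) \<longleftrightarrow>
          (\<forall>g\<in>l2seq. l2norm (V h) \<le> l2norm (\<lambda>n. V h n + wshift W2 g n))"
    proof
      assume L: "\<forall>g\<in>l2seq. l2norm h \<le> l2norm (\<lambda>n. h n + wshift W1 g n)"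
      show "\<forall>g\<in>l2seq. l2norm (V h) \<le> l2norm (\<lambda>n. V h n + wshift W2 g n)"
      proof
        fix g :: "nat \<Rightarrow> 'b" assume g: "g \<in> l2seq"
        then obtain g' where g': "g' \<in> l2seq" "V g' = g" using Vonto by blast
        show "l2norm (V h) \<le> l2norm (\<lambda>n. V h n + wshift W2 g n)"
          using L g' key[OF h g'(1)] Vn[OF h] by auto
      qed
    next
      assume R: "\<forall>g\<in>l2seq. l2norm (V h) \<le> l2norm (\<lambda>n. V h n + wshift W2 g n)"
      show "\<forall>g\<in>l2seq. l2norm h \<le> l2norm (\<lambda>n. h n + wshift W1 g n)"
      proof
        fix g' :: "nat \<Rightarrow> 'a" assume g': "g' \<in> l2seq"
        show "l2norm h \<le> l2norm (\<lambda>n. h n + wshift W1 g' n)"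
          using R Vl2[OF g'] key[OF h g'] Vn[OF h] by auto
      qed
    qed
    then show ?thesis using supp_char[OF sw1 h] supp_char[OF sw2 Vl2[OF h]] by simp
  qed
  define U0 where "U0 x = V (single 0 x) 0" for x
  have Vs: "V (single 0 x) = single 0 (U0 x)" for x
  proof -
    have "\<forall>n>0. single 0 x n = 0" by (simp add: single_def)
    then have "\<forall>n>0. V (single 0 x) n = 0" using transport[OF single_l2] by blast
    then show ?thesis by (auto simp: U0_def single_def)
  qed
  have U0add: "U0 (x + y) = U0 x + U0 y" for x y
    by (simp add: U0_def single_add Vadd[OF single_l2 single_l2])
  have U0hom: "U0 (a *\<^sub>C x) = a *\<^sub>C U0 x" for a x
    by (simp add: U0_def single_scaleC Vhom[OF single_l2])
  have U0n: "norm (U0 x) = norm x" for x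
    using Vn[OF single_l2[of 0 x]] by (simp add: Vs l2norm_single)
  have U0s: "surj U0"
  proof -
    have "y \<in> range U0" for y
    proof -
      obtain h where h: "h \<in> l2seq" "V h = single 0 y" using Vonto[OF single_l2] by blast
      have "\<forall>n>0. V h n = 0" using h(2) by (simp add: single_def)
      then have "\<forall>n>0. h n = 0" using transport[OF h(1)] by blast
      then have "h = single 0 (h 0)" by (rule supp_single)
      then have "single 0 (U0 (h 0)) = single 0 y" using Vs[of "h 0"] h(2) by metis
      then have "U0 (h 0) = y" by (metis single_def)
      then show ?thesis by blast
    qed
    then show ?thesis by blast
  qed
  have U0u: "unitary U0" unfolding unitary_def bounded_clinear_def
    using U0add U0hom U0n U0s by (auto intro!: exI[of _ 1])
  have ind: "V (single n (wprod W1 n x)) = single n (wprod W2 n (U0 x))" for n x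
  proof (induction n)
    case 0 then show ?case by (simp add: Vs)
  next
    case (Suc n)
    have "V (single (Suc n) (wprod W1 (Suc n) x)) = V (wshift W1 (single n (wprod W1 n x)))"
      by (simp add: wshift_single[OF sw1])
    also have "\<dots> = wshift W2 (V (single n (wprod W1 n x)))" by (rule comm[OF single_l2])
    also have "\<dots> = single (Suc n) (wprod W2 (Suc n) (U0 x))" by (simp add: Suc wshift_single[OF sw2])
    finally show ?case .
  qed
  have "norm (wprod W1 i x) = norm (wprod W2 i (U0 x))" for i x
    using Vn[OF single_l2[of i "wprod W1 i x"]] by (simp add: ind l2norm_single)
  then show ?thesis using U0u by blast
qed

lemma dir2:
  fixes W1 :: "nat \<Rightarrow> 'a::complex_hilbert \<Rightarrow> 'a" and W2 :: "nat \<Rightarrow> 'b::complex_hilbert \<Rightarrow> 'b"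
  assumes sw1: "shift_weights_dense W1" and sw2: "shift_weights_dense W2"
    and U0: "unitary U0" and n: "\<And>i x. norm (wprod W1 i x) = norm (wprod W2 i (U0 x))"
  shows "unit_equiv_l2 (wshift W1) (wshift W2)"
proof -
  have U0bc: "bounded_clinear U0" and U0s: "surj U0" using U0 by (auto simp: unitary_def)
  have "\<exists>U. unitary U \<and> (\<forall>x. U (wprod W1 i x) = (wprod W2 i \<circ> U0) x)" for i
  proof (rule extend_unitary)
    show "bounded_clinear (wprod W1 i)" by (rule wprod_bclin[OF sw1])
    show "bounded_clinear (wprod W2 i \<circ> U0)" by (rule bclin_comp[OF wprod_bclin[OF sw2] U0bc])
    show "closure (range (wprod W1 i)) = UNIV" by (rule wprod_dense[OF sw1])
    have "range (wprod W2 i \<circ> U0) = wprod W2 i ` range U0" by (rule image_comp[symmetric])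
    then have "range (wprod W2 i \<circ> U0) = range (wprod W2 i)" using U0s by simp
    then show "closure (range (wprod W2 i \<circ> U0)) = UNIV" by (simp add: wprod_dense[OF sw2])
    show "norm (wprod W1 i x) = norm ((wprod W2 i \<circ> U0) x)" for x by (simp add: n)
  qed
  then obtain Uf where Uf: "\<And>i. unitary (Uf i)" "\<And>i x. Uf i (wprod W1 i x) = wprod W2 i (U0 x)"
    by (metis comp_apply)
  have Ubc: "bounded_clinear (Uf i)" for i using Uf(1) by (simp add: unitary_def)
  have Un: "norm (Uf i y) = norm y" for i y using Uf(1) by (simp add: unitary_def)
  have inter: "Uf (Suc m) (W1 m y) = W2 m (Uf m y)" for m y
  proof -
    have "(Uf (Suc m) \<circ> W1 m) y = (W2 m \<circ> Uf m) y"
    proof (rule dense_eq[of _ _ "range (wprod W1 m)"])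
      show "continuous_on UNIV (Uf (Suc m) \<circ> W1 m)"
        by (rule bclin_cont[OF bclin_comp[OF Ubc sw_bclin[OF sw1]]])
      show "continuous_on UNIV (W2 m \<circ> Uf m)"
        by (rule bclin_cont[OF bclin_comp[OF sw_bclin[OF sw2] Ubc]])
      show "closure (range (wprod W1 m)) = UNIV" by (rule wprod_dense[OF sw1])
      fix z assume "z \<in> range (wprod W1 m)"
      then obtain x where x: "z = wprod W1 m x" by auto
      have "Uf (Suc m) (W1 m (wprod W1 m x)) = Uf (Suc m) (wprod W1 (Suc m) x)" by simp
      also have "\<dots> = wprod W2 (Suc m) (U0 x)" by (rule Uf(2))
      also have "\<dots> = W2 m (Uf m (wprod W1 m x))" by (simp add: Uf(2))
      finally show "(Uf (Suc m) \<circ> W1 m) z = (W2 m \<circ> Uf m) z" by (simp add: x)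
    qed
    then show ?thesis by simp
  qed
  define V where "V h = (\<lambda>n. Uf n (h n))" for h :: "nat \<Rightarrow> 'a"
  have Vnorm: "(\<lambda>n. (norm (V h n))\<^sup>2) = (\<lambda>n. (norm (h n))\<^sup>2)" for h by (simp add: V_def Un)
  have "unitary_l2 V"
    unfolding unitary_l2_def
  proof (intro conjI ballI allI)
    fix h :: "nat \<Rightarrow> 'a" assume "h \<in> l2seq"
    then show "V h \<in> l2seq" by (simp add: l2seq_def Vnorm)
    show "l2norm (V h) = l2norm h" by (simp add: l2norm_def Vnorm)
    fix a show "V (\<lambda>n. a *\<^sub>C h n) = (\<lambda>n. a *\<^sub>C V h n)" by (simp add: V_def bclinD[OF Ubc])
  next
    fix h g :: "nat \<Rightarrow> 'a" 
    show "V (\<lambda>n. h n + g n) = (\<lambda>n. V h n + V g n)" by (simp add: V_def bclinD[OF Ubc])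
  next
    fix g :: "nat \<Rightarrow> 'b" assume g: "g \<in> l2seq"
    define h where "h n = adjoint (Uf n) (g n)" for n
    have "(\<lambda>n. (norm (h n))\<^sup>2) = (\<lambda>n. (norm (g n))\<^sup>2)" by (simp add: h_def unitary_adjoint(5)[OF Uf(1)])
    then have "h \<in> l2seq" using g by (simp add: l2seq_def)
    moreover have "V h = g" by (simp add: V_def h_def unitary_adjoint(2)[OF Uf(1)])
    ultimately show "\<exists>h\<in>l2seq. V h = g" by blast
  qed
  moreover have "V (wshift W1 h) = wshift W2 (V h)" for h
  proof
    fix n show "V (wshift W1 h) n = wshift W2 (V h) n"
      by (cases n) (simp_all add: V_def wshift_def bclin_zero[OF Ubc] inter)
  qed
  ultimately show ?thesis unfolding unit_equiv_l2_def by blast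
qed

theorem mainTheorem7:
  fixes W1 :: "nat \<Rightarrow> 'a::complex_hilbert \<Rightarrow> 'a"
    and W2 :: "nat \<Rightarrow> 'b::complex_hilbert \<Rightarrow> 'b"
  assumes "\<exists>x::'a. x \<noteq> 0" and "\<exists>y::'b. y \<noteq> 0"
    and "shift_weights_dense W1" and "shift_weights_dense W2"
  shows "unit_equiv_l2 (wshift W1) (wshift W2) \<longleftrightarrow>
    (\<exists>U0 :: 'a \<Rightarrow> 'b. unitary U0 \<and>
       (\<forall>i\<ge>1. op_abs (wprod W1 i) = adjoint U0 \<circ> op_abs (wprod W2 i) \<circ> U0))"
proof
  assume "unit_equiv_l2 (wshift W1) (wshift W2)"
  then obtain U0 where U0: "unitary U0" and n: "\<And>i x. norm (wprod W1 i x) = norm (wprod W2 i (U0 x))"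
    using dir1[OF assms(3,4)] by blast
  have "op_abs (wprod W1 i) = adjoint U0 \<circ> op_abs (wprod W2 i) \<circ> U0" for i
    using abs_key[OF wprod_bclin[OF assms(3)] wprod_bclin[OF assms(4)] U0] n by blast
  then show "\<exists>U0 :: 'a \<Rightarrow> 'b. unitary U0 \<and>
       (\<forall>i\<ge>1. op_abs (wprod W1 i) = adjoint U0 \<circ> op_abs (wprod W2 i) \<circ> U0)" using U0 by blast
next
  assume "\<exists>U0 :: 'a \<Rightarrow> 'b. unitary U0 \<and>
       (\<forall>i\<ge>1. op_abs (wprod W1 i) = adjoint U0 \<circ> op_abs (wprod W2 i) \<circ> U0)"
  then obtain U0 :: "'a \<Rightarrow> 'b" where U0: "unitary U0"
    and e: "\<And>i. i \<ge> 1 \<Longrightarrow> op_abs (wprod W1 i) = adjoint U0 \<circ> op_abs (wprod W2 i) \<circ> U0" by blast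
  have "norm (wprod W1 i x) = norm (wprod W2 i (U0 x))" for i x
  proof (cases "i = 0")
    case True then show ?thesis using U0 by (simp add: unitary_def)
  next
    case False
    then have "i \<ge> 1" by simp
    then show ?thesis
      using abs_key[OF wprod_bclin[OF assms(3)] wprod_bclin[OF assms(4)] U0] e by blast
  qed
  then show "unit_equiv_l2 (wshift W1) (wshift W2)" by (rule dir2[OF assms(3,4) U0])
qed


end
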